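(* Let $X_1,X_2,\dots$ be i.i.d. $\mathbb{Z}$-valued random variables on $(\Omega,\mathcal{F},P)$ satisfying (A1), (A2), (A3) below, with constants $\beta,c_*,\varepsilon$ from (A3), and let $p^{(N)}_i$ be as in the context. If $\beta\in(0,1)$, there is a constant $c_8>0$ such that $\sum_{i=0}^{N-1}p^{(N)}_i\le c_8$ for all $N\in\mathbb{N}\setminus\{1\}$. If $\beta=1$, there is a constant $c_9>0$ such that $\sum_{i=0}^{N-1}p^{(N)}_i\le\frac{1}{c_*\pi}\log N+c_9$ for all $N\in\mathbb{N}\setminus\{1\}$. If $\beta\in(1,2]$, there is a constant $c_{10}>0$ such that $\sum_{i=0}^{N-1}p^{(N)}_i\le c_{10}N^{(\beta-1)/\beta}$ for all $N\in\mathbb{N}\setminus\{1\}$.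
   Context: $S_n=\sum_{j=1}^nX_j$; $[y]_N=\{y+kN:k\in\mathbb{Z}\}$; $p^{(N)}_0=1$ and $p^{(N)}_i=\max_{y\in\mathbb{Z},|y|\le i}P\{S_i\in[y]_N\}$ for $i\in\mathbb{N}$. $\phi(\theta)=\sum_{k\in\mathbb{Z}}e^{i\theta k}P\{X_1=k\}$. (A1) For each $y\in\mathbb{Z}$, the smallest subgroup of $\mathbb{Z}$ containing $\{y+k:P\{X_1=k\}>0\}$ is $\mathbb{Z}$. (A2) $P\{X_1=k\}=P\{X_1=-k\}$ for all $k\in\mathbb{Z}$. (A3) There exist $\beta\in(0,2]$, $c_*>0$, $\varepsilon>0$ with $\phi(\theta)=1-c_*|\theta|^\beta+O(|\theta|^{\beta+\varepsilon})$ as $\theta\to0$. The constants $c_8,c_9,c_{10}$ do not depend on $N$. *)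

theory Defs
  imports "HOL-Probability.Probability" "HOL-Library.Landau_Symbols"
begin

definition partial_sum :: "(nat \<Rightarrow> 'a \<Rightarrow> int) \<Rightarrow> nat \<Rightarrow> 'a \<Rightarrow> int" where
  "partial_sum X n \<omega> = (\<Sum>j=1..n. X j \<omega>)"

definition res_class :: "int \<Rightarrow> nat \<Rightarrow> int set" where
  "res_class y N = {y + k * int N | k. True}"

definition pN :: "'a measure \<Rightarrow> (nat \<Rightarrow> 'a \<Rightarrow> int) \<Rightarrow> nat \<Rightarrow> nat \<Rightarrow> real" where
  "pN M X N i = (if i = 0 then 1
     else Max ((\<lambda>y. measure M {\<omega> \<in> space M. partial_sum X i \<omega> \<in> res_class y N})
                 ` {y. \<bar>y\<bar> \<le> int i}))"

definition char_fun :: "'a measure \<Rightarrow> (nat \<Rightarrow> 'a \<Rightarrow> int) \<Rightarrow> real \<Rightarrow> complex" where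
  "char_fun M X \<theta> = infsum (\<lambda>k::int. exp (\<i> * of_real (\<theta> * of_int k)) *
        of_real (measure M {\<omega> \<in> space M. X 1 \<omega> = k})) UNIV"

definition int_subgroup :: "int set \<Rightarrow> bool" where
  "int_subgroup H \<longleftrightarrow> 0 \<in> H \<and> (\<forall>a\<in>H. \<forall>b\<in>H. a - b \<in> H)"

definition gen_subgroup :: "int set \<Rightarrow> int set" where
  "gen_subgroup A = \<Inter>{H. int_subgroup H \<and> A \<subseteq> H}"

end

theory Submission
  imports Defs
begin


lemma sum_antitone_le:
  fixes F g :: "real \<Rightarrow> real"
  assumes D: "\<And>x. x > 0 \<Longrightarrow> (F has_real_derivative g x) (at x)"
    and A: "\<And>x y. 0 < x \<Longrightarrow> x \<le> y \<Longrightarrow> g y \<le> g x"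
    and a: "1 \<le> a" "a \<le> b"
  shows "(\<Sum>j\<in>{a<..b::nat}. g (real j)) \<le> F (real b) - F (real a)"
  using a(2)
proof (induction b)
  case 0 then show ?case by simp
next
  case (Suc b)
  show ?case
  proof (cases "a = Suc b")
    case True then show ?thesis by simp
  next
    case False
    then have ab: "a \<le> b" using Suc by simp
    have "\<exists>z. real b < z \<and> z < real (Suc b) \<and> F (real (Suc b)) - F (real b) = (real (Suc b) - real b) * g z"
    proof (rule MVT2)
      fix x assume "real b \<le> x" "x \<le> real (Suc b)"
      moreover have "real b \<ge> 1" using a ab by simp
      ultimately show "(F has_real_derivative g x) (at x)" by (intro D) auto
    qed simp
    then obtain z where z: "real b < z" "z < real (Suc b)" "F (real (Suc b)) - F (real b) = g z" by auto
    have "g (real (Suc b)) \<le> g z" using z a ab by (intro A) auto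
    moreover have "{a<..Suc b} = insert (Suc b) {a<..b}" using ab by auto
    ultimately show ?thesis using Suc.IH[OF ab] z by simp
  qed
qed

lemma sum_inv_le_ln:
  assumes "1 \<le> b"
  shows "(\<Sum>j\<in>{1..b::nat}. 1 / real j) \<le> 1 + ln (real b)"
proof -
  have "(\<Sum>j\<in>{1<..b}. 1 / real j) \<le> ln (real b) - ln (real 1)"
    by (rule sum_antitone_le[where g="\<lambda>x. 1/x"]) (use assms in \<open>auto intro!: derivative_eq_intros simp: frac_le\<close>)
  moreover have "{1..b} = insert 1 {1<..b}" using assms by auto
  ultimately show ?thesis by simp
qed

lemma sum_powr_le:
  fixes \<gamma> :: real
  assumes "0 \<le> \<gamma>" "\<gamma> \<noteq> 1" "1 \<le> a" "a \<le> b"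
  shows "(\<Sum>j\<in>{a<..b::nat}. real j powr (-\<gamma>)) \<le> (real b powr (1-\<gamma>) - real a powr (1-\<gamma>)) / (1-\<gamma>)"
proof -
  have "(\<Sum>j\<in>{a<..b::nat}. real j powr (-\<gamma>)) \<le> real b powr (1-\<gamma>) / (1-\<gamma>) - real a powr (1-\<gamma>) / (1-\<gamma>)"
  proof (rule sum_antitone_le[where F="\<lambda>x. x powr (1-\<gamma>) / (1-\<gamma>)"])
    fix x :: real assume "x > 0"
    then show "((\<lambda>x. x powr (1-\<gamma>) / (1-\<gamma>)) has_real_derivative x powr (-\<gamma>)) (at x)"
      using assms by (auto intro!: derivative_eq_intros)
  next
    fix x y :: real assume "0 < x" "x \<le> y"
    then show "y powr (-\<gamma>) \<le> x powr (-\<gamma>)" using assms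
      by (simp add: powr_minus divide_simps powr_mono2)
  qed (use assms in auto)
  then show ?thesis by (simp add: diff_divide_distrib)
qed


lemma geom_le_inv:
  fixes r :: real assumes "0 \<le> r" "r < 1"
  shows "(\<Sum>i<n. r ^ i) \<le> 1 / (1 - r)"
proof -
  have "(\<Sum>i<n. r ^ i) = (1 - r ^ n) / (1 - r)" using assms by (simp add: sum_gp_strict)
  also have "\<dots> \<le> 1 / (1 - r)" using assms by (intro divide_right_mono) auto
  finally show ?thesis .
qed

lemma geom_le_n:
  fixes r :: real assumes "0 \<le> r" "r \<le> 1"
  shows "(\<Sum>i<n. r ^ i) \<le> real n"
proof -
  have "(\<Sum>i<n. r ^ i) \<le> (\<Sum>i<n. 1)" by (intro sum_mono) (use assms in \<open>auto intro: power_le_one\<close>)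
  then show ?thesis by simp
qed

lemma core_sum:
  fixes r :: "real \<Rightarrow> real" and p h :: "nat \<Rightarrow> real" and N :: nat
  assumes N: "N \<ge> 2"
    and r0: "\<And>t. 0 \<le> r t" and r1: "\<And>t. r t \<le> 1"
    and rsym: "\<And>m. 1 \<le> m \<Longrightarrow> m < N \<Longrightarrow> r (2*pi*real (N-m)/real N) = r (2*pi*real m/real N)"
    and \<rho>: "0 \<le> \<rho>" "\<rho> < 1" and \<delta>: "0 < \<delta>" "\<delta> < pi"
    and far: "\<And>t. \<delta> \<le> t \<Longrightarrow> t \<le> 2*pi - \<delta> \<Longrightarrow> r t \<le> \<rho>"
    and pb: "\<And>i. i < N \<Longrightarrow> p i \<le> (1/real N) * (\<Sum>m<N. r (2*pi*real m/real N) ^ i)"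
    and h0: "\<And>j. 0 \<le> h j"
    and hb: "\<And>j. 1 \<le> j \<Longrightarrow> j < N \<Longrightarrow> 2*pi*real j/real N < \<delta> \<Longrightarrow>
               (\<Sum>i<N. r (2*pi*real j/real N) ^ i) \<le> h j"
  shows "(\<Sum>i<N. p i) \<le> 1 + 1/(1-\<rho>) + (2/real N) * (\<Sum>j\<in>{1..<N}. h j)"
proof -
  define T where "T m = (\<Sum>i<N. r (2*pi*real m/real N) ^ i)" for m
  have Nr: "real N > 0" using N by simp
  have "(\<Sum>i<N. p i) \<le> (\<Sum>i<N. (1/real N) * (\<Sum>m<N. r (2*pi*real m/real N) ^ i))"
    by (intro sum_mono pb) auto
  also have "\<dots> = (1/real N) * (\<Sum>m<N. T m)"
    unfolding T_def sum_distrib_left by (rule sum.swap)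
  finally have S1: "(\<Sum>i<N. p i) \<le> (1/real N) * (\<Sum>m<N. T m)" .
  have T0: "T 0 \<le> real N" unfolding T_def by (rule geom_le_n) (use r0 r1 in auto)
  have Tm: "T m \<le> 1/(1-\<rho>) + h m + h (N-m)" if m: "1 \<le> m" "m < N" for m
  proof -
    define t where "t = 2*pi*real m/real N"
    have tpos: "0 < t" using m Nr by (simp add: t_def)
    consider "t < \<delta>" | "\<delta> \<le> t \<and> t \<le> 2*pi - \<delta>" | "2*pi - \<delta> < t" by linarith
    then show ?thesis
    proof cases
      case 1
      then have "T m \<le> h m" using hb[OF m] unfolding T_def t_def by simp
      moreover have "0 < 1/(1-\<rho>)" using \<rho> by simp
      ultimately show ?thesis using h0[of "N-m"] by linarith
    next
      case 2
      then have "r t \<le> \<rho>" by (intro far) auto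
      then have "T m \<le> 1/(1 - r t)" unfolding T_def t_def[symmetric]
        using \<rho> r0 by (intro geom_le_inv) auto
      also have "\<dots> \<le> 1/(1-\<rho>)" using \<open>r t \<le> \<rho>\<close> \<rho> by (intro divide_left_mono) auto
      finally show ?thesis using h0[of m] h0[of "N-m"] by simp
    next
      case 3
      have eq: "2*pi*real (N-m)/real N = 2*pi - t" using m Nr
        by (simp add: t_def of_nat_diff field_simps)
      have "2*pi*real (N-m)/real N < \<delta>" using 3 eq by simp
      then have "(\<Sum>i<N. r (2*pi*real (N-m)/real N) ^ i) \<le> h (N-m)"
        using m by (intro hb) auto
      then have "T m \<le> h (N-m)" unfolding T_def using rsym[OF m] by simp
      moreover have "0 < 1/(1-\<rho>)" using \<rho> by simp
      ultimately show ?thesis using h0[of m] by linarith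
    qed
  qed
  have "(\<Sum>m<N. T m) = T 0 + (\<Sum>m\<in>{1..<N}. T m)"
  proof -
    have "{..<N} = insert 0 {1..<N}" using N by auto
    then show ?thesis by simp
  qed
  also have "\<dots> \<le> real N + (\<Sum>m\<in>{1..<N}. 1/(1-\<rho>) + h m + h (N-m))"
    using T0 Tm by (intro add_mono sum_mono) auto
  also have "(\<Sum>m\<in>{1..<N}. 1/(1-\<rho>) + h m + h (N-m)) =
      real (N-1) * (1/(1-\<rho>)) + (\<Sum>m\<in>{1..<N}. h m) + (\<Sum>m\<in>{1..<N}. h (N-m))"
    by (simp add: sum.distrib)
  also have "(\<Sum>m\<in>{1..<N}. h (N-m)) = (\<Sum>m\<in>{1..<N}. h m)"
    by (rule sum.reindex_bij_witness[where i="\<lambda>m. N-m" and j="\<lambda>m. N-m"]) auto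
  finally have "(\<Sum>m<N. T m) \<le> real N + real (N-1) * (1/(1-\<rho>)) + 2 * (\<Sum>m\<in>{1..<N}. h m)"
    by simp
  also have "\<dots> \<le> real N + real N * (1/(1-\<rho>)) + 2 * (\<Sum>m\<in>{1..<N}. h m)"
  proof -
    have "real (N-1) * (1/(1-\<rho>)) \<le> real N * (1/(1-\<rho>))"
      using \<rho> by (intro mult_right_mono) auto
    then show ?thesis by linarith
  qed
  finally have "(1/real N) * (\<Sum>m<N. T m) \<le> (1/real N) * (real N + real N * (1/(1-\<rho>)) + 2 * (\<Sum>m\<in>{1..<N}. h m))"
    using Nr by (intro mult_left_mono) auto
  also have "\<dots> = 1 + 1/(1-\<rho>) + (2/real N) * (\<Sum>j\<in>{1..<N}. h j)"
    using Nr by (simp add: field_simps)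
  finally show ?thesis using S1 by linarith
qed


locale rsetup =
  fixes r :: "real \<Rightarrow> real" and \<rho> \<delta> c C \<beta> \<epsilon> :: real
  assumes r0: "\<And>t. 0 \<le> r t" and r1: "\<And>t. r t \<le> 1"
    and rsym: "\<And>t. r (2*pi - t) = r t"
    and \<rho>: "0 \<le> \<rho>" "\<rho> < 1" and \<delta>: "0 < \<delta>" "\<delta> < pi"
    and far: "\<And>t. \<delta> \<le> t \<Longrightarrow> t \<le> 2*pi - \<delta> \<Longrightarrow> r t \<le> \<rho>"
    and near: "\<And>t. 0 < t \<Longrightarrow> t < \<delta> \<Longrightarrow> r t \<le> 1 - c * t powr \<beta> + C * t powr (\<beta> + \<epsilon>)"
    and C: "0 \<le> C" and C\<delta>: "C * \<delta> powr \<epsilon> \<le> c / 2"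
    and c: "0 < c" and \<beta>: "0 < \<beta>" and \<epsilon>: "0 < \<epsilon>" "\<epsilon> < 1"
begin

lemma near_half: assumes "0 < t" "t < \<delta>" shows "r t \<le> 1 - (c/2) * t powr \<beta>"
proof -
  have "C * t powr (\<beta> + \<epsilon>) = (C * t powr \<epsilon>) * t powr \<beta>" using assms by (simp add: powr_add)
  also have "\<dots> \<le> (c/2) * t powr \<beta>"
  proof (rule mult_right_mono)
    have "t powr \<epsilon> \<le> \<delta> powr \<epsilon>" using assms \<epsilon> by (intro powr_mono2) auto
    then show "C * t powr \<epsilon> \<le> c/2" using C C\<delta> by (meson mult_left_mono order_trans)
  qed simp
  finally show ?thesis using near[OF assms] by (simp add: algebra_simps)
qed

lemma geo_half: assumes "0 < t" "t < \<delta>" shows "(\<Sum>i<n. r t ^ i) \<le> 2 / (c * t powr \<beta>)"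
proof -
  have pos: "0 < (c/2) * t powr \<beta>" using assms c by simp
  have "r t < 1" using near_half[OF assms] pos by linarith
  then have "(\<Sum>i<n. r t ^ i) \<le> 1 / (1 - r t)" using r0 by (intro geom_le_inv) auto
  also have "\<dots> \<le> 1 / ((c/2) * t powr \<beta>)"
    using near_half[OF assms] pos by (intro divide_left_mono) auto
  also have "\<dots> = 2 / (c * t powr \<beta>)" by simp
  finally show ?thesis .
qed

lemma core': assumes N: "N \<ge> 2"
    and pb: "\<And>i. i < N \<Longrightarrow> p i \<le> (1/real N) * (\<Sum>m<N. r (2*pi*real m/real N) ^ i)"
    and h0: "\<And>j. 0 \<le> h j"
    and hb: "\<And>j. 1 \<le> j \<Longrightarrow> j < N \<Longrightarrow> 2*pi*real j/real N < \<delta> \<Longrightarrow>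
               (\<Sum>i<N. r (2*pi*real j/real N) ^ i) \<le> h j"
  shows "(\<Sum>i<N. p i) \<le> 1 + 1/(1-\<rho>) + (2/real N) * (\<Sum>j\<in>{1..<N}. h j)"
proof (rule core_sum[OF N r0 r1 _ \<rho> \<delta> far pb h0 hb])
  fix m assume "1 \<le> m" "m < N"
  then have "2*pi*real (N-m)/real N = 2*pi - 2*pi*real m/real N"
    by (simp add: of_nat_diff field_simps)
  then show "r (2*pi*real (N-m)/real N) = r (2*pi*real m/real N)" using rsym by simp
qed auto

end


lemma sum_powr_upto:
  fixes \<gamma> :: real assumes "0 \<le> \<gamma>" "\<gamma> < 1" "1 \<le> N"
  shows "(\<Sum>j\<in>{1..N}. real j powr (-\<gamma>)) \<le> 1 + real N powr (1-\<gamma>) / (1-\<gamma>)"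
proof -
  have "{1..N} = insert 1 {1<..N}" using assms by auto
  then have "(\<Sum>j\<in>{1..N}. real j powr (-\<gamma>)) = 1 + (\<Sum>j\<in>{1<..N}. real j powr (-\<gamma>))" by simp
  also have "(\<Sum>j\<in>{1<..N}. real j powr (-\<gamma>)) \<le> (real N powr (1-\<gamma>) - real 1 powr (1-\<gamma>)) / (1-\<gamma>)"
    by (rule sum_powr_le) (use assms in auto)
  also have "\<dots> \<le> real N powr (1-\<gamma>) / (1-\<gamma>)" using assms by (intro divide_right_mono) auto
  finally show ?thesis by simp
qed

context rsetup begin

lemma case_lt1:
  assumes b1: "\<beta> < 1" and N: "N \<ge> 2"
    and pb: "\<And>i. i < N \<Longrightarrow> p i \<le> (1/real N) * (\<Sum>m<N. r (2*pi*real m/real N) ^ i)"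
  shows "(\<Sum>i<N. p i) \<le> 1 + 1/(1-\<rho>) + (4/c) * (2*pi) powr (-\<beta>) * (1 + 1/(1-\<beta>))"
proof -
  define h where "h j = (2/c) * (2*pi*real j/real N) powr (-\<beta>)" for j :: nat
  have Nr: "real N \<ge> 2" using N by simp
  have S: "(\<Sum>i<N. p i) \<le> 1 + 1/(1-\<rho>) + (2/real N) * (\<Sum>j\<in>{1..<N}. h j)"
  proof (rule core'[OF N pb])
    fix j show "0 \<le> h j" using c by (simp add: h_def)
  next
    fix j :: nat assume j: "1 \<le> j" "j < N" "2*pi*real j/real N < \<delta>"
    have tp: "0 < 2*pi*real j/real N" using j N by simp
    have "(\<Sum>i<N. r (2*pi*real j/real N) ^ i) \<le> 2 / (c * (2*pi*real j/real N) powr \<beta>)"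
      by (rule geo_half) (use j tp in auto)
    also have "\<dots> = h j" unfolding h_def powr_minus by (simp add: divide_inverse)
    finally show "(\<Sum>i<N. r (2*pi*real j/real N) ^ i) \<le> h j" .
  qed auto
  have hj: "h j = (2/c) * (2*pi) powr (-\<beta>) * real N powr \<beta> * real j powr (-\<beta>)" if "1 \<le> j" for j
  proof -
    have "(2*pi*real j/real N) powr (-\<beta>) = ((2*pi) powr (-\<beta>) * real j powr (-\<beta>)) / real N powr (-\<beta>)"
      using that Nr by (simp add: powr_divide powr_mult)
    also have "\<dots> = (2*pi) powr (-\<beta>) * real j powr (-\<beta>) * real N powr \<beta>"
      by (simp add: powr_minus divide_inverse)
    finally show ?thesis by (simp add: h_def)
  qed
  define K where "K = (2/c) * (2*pi) powr (-\<beta>) * real N powr \<beta>"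
  have K0: "0 \<le> K" using c by (simp add: K_def)
  have "(\<Sum>j\<in>{1..<N}. h j) = K * (\<Sum>j\<in>{1..<N}. real j powr (-\<beta>))"
    by (simp add: hj sum_distrib_left K_def)
  moreover have "(\<Sum>j\<in>{1..<N}. real j powr (-\<beta>)) \<le> (\<Sum>j\<in>{1..N}. real j powr (-\<beta>))"
    by (intro sum_mono2) auto
  moreover have "(\<Sum>j\<in>{1..N}. real j powr (-\<beta>)) \<le> 1 + real N powr (1-\<beta>) / (1-\<beta>)"
    by (rule sum_powr_upto) (use b1 \<beta> N in auto)
  ultimately have "(\<Sum>j\<in>{1..<N}. h j) \<le> K * (1 + real N powr (1-\<beta>) / (1-\<beta>))"
    using mult_left_mono[OF _ K0, of "(\<Sum>j\<in>{1..<N}. real j powr (-\<beta>))" "1 + real N powr (1-\<beta>) / (1-\<beta>)"]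
    by linarith
  then have "(\<Sum>j\<in>{1..<N}. h j) \<le> (2/c) * (2*pi) powr (-\<beta>) * real N powr \<beta> * (1 + real N powr (1-\<beta>) / (1-\<beta>))"
    by (simp add: K_def)
  then have "(2/real N) * (\<Sum>j\<in>{1..<N}. h j) \<le> (2/real N) * ((2/c) * (2*pi) powr (-\<beta>) * real N powr \<beta> * (1 + real N powr (1-\<beta>) / (1-\<beta>)))"
    using Nr by (intro mult_left_mono) auto
  also have "\<dots> = (4/c) * (2*pi) powr (-\<beta>) * (real N powr (\<beta> - 1) + 1/(1-\<beta>))"
  proof -
    define a where "a = real N powr \<beta>"
    have a0: "a > 0" using Nr by (simp add: a_def)
    have e1: "real N powr (\<beta> - 1) = a / real N" using Nr by (simp add: powr_diff a_def)
    have e2: "real N powr (1-\<beta>) = real N / a" using Nr by (simp add: powr_diff a_def)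
    have q: "1 - \<beta> > 0" using b1 by simp
    show ?thesis unfolding e1 e2 a_def[symmetric] using a0 Nr q c
      by (simp add: divide_simps)
  qed
  also have "\<dots> \<le> (4/c) * (2*pi) powr (-\<beta>) * (1 + 1/(1-\<beta>))"
  proof -
    have "real N powr (\<beta> - 1) \<le> real N powr 0" using Nr b1 by (intro powr_mono) auto
    then have "real N powr (\<beta> - 1) \<le> 1" using Nr by simp
    then show ?thesis using c by (intro mult_left_mono) auto
  qed
  finally show ?thesis using S by linarith
qed

end


lemma inv_diff_bound:
  fixes a b :: real assumes "0 < a" "0 \<le> b" "b \<le> a/2"
  shows "1/(a-b) \<le> 1/a + 2*b/a^2"
proof -
  have "1/(a-b) - 1/a = b/(a*(a-b))" using assms by (simp add: field_simps)
  also have "\<dots> \<le> b/(a*(a/2))" using assms by (intro divide_left_mono mult_left_mono mult_pos_pos) auto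
  also have "\<dots> = 2*b/a^2" by (simp add: power2_eq_square)
  finally show ?thesis by simp
qed

context rsetup begin

lemma geo_one: assumes b1: "\<beta> = 1" and t: "0 < t" "t < \<delta>"
  shows "(\<Sum>i<n. r t ^ i) \<le> 1/(c*t) + (2*C/c^2) * t powr (\<epsilon> - 1)"
proof -
  define a where "a = c * t"
  define b where "b = C * t powr (1 + \<epsilon>)"
  have a0: "0 < a" using c t by (simp add: a_def)
  have b0: "0 \<le> b" using C by (simp add: b_def)
  have bt: "b = (C * t powr \<epsilon>) * t" using t by (simp add: b_def powr_add)
  have "C * t powr \<epsilon> \<le> c/2"
  proof -
    have "t powr \<epsilon> \<le> \<delta> powr \<epsilon>" using t \<epsilon> by (intro powr_mono2) auto
    then show ?thesis using C C\<delta> by (meson mult_left_mono order_trans)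
  qed
  then have ba: "b \<le> a/2" unfolding bt a_def using t by (simp add: mult_right_mono)
  have rt: "r t \<le> 1 - (a - b)" using near[OF t] b1 t by (simp add: a_def b_def)
  have "r t < 1" using rt ba a0 by linarith
  then have "(\<Sum>i<n. r t ^ i) \<le> 1 / (1 - r t)" using r0 by (intro geom_le_inv) auto
  also have "\<dots> \<le> 1 / (a - b)" using rt ba a0 by (intro divide_left_mono) auto
  also have "\<dots> \<le> 1/a + 2*b/a^2" by (rule inv_diff_bound[OF a0 b0 ba])
  also have "2*b/a^2 = (2*C/c^2) * t powr (\<epsilon> - 1)"
  proof -
    have "t powr (\<epsilon> - 1) = t powr ((1 + \<epsilon>) - 2)" by simp
    also have "\<dots> = t powr (1 + \<epsilon>) / t powr 2" by (rule powr_diff)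
    finally have tt0: "t powr (\<epsilon> - 1) = t powr (1 + \<epsilon>) / t powr 2" .
    have "t powr 2 = t^2" using t by (simp add: powr_numeral)
    with tt0 have tt: "t powr (\<epsilon> - 1) = t powr (1 + \<epsilon>) / t^2" by simp
    have "2*b/a^2 = (2*C/c^2) * (t powr (1 + \<epsilon>) / t^2)"
      unfolding a_def b_def using c t by (simp add: power_mult_distrib)
    then show ?thesis using tt by simp
  qed
  finally show ?thesis by (simp add: a_def)
qed

lemma case_eq1:
  assumes b1: "\<beta> = 1" and N: "N \<ge> 2"
    and pb: "\<And>i. i < N \<Longrightarrow> p i \<le> (1/real N) * (\<Sum>m<N. r (2*pi*real m/real N) ^ i)"
  shows "(\<Sum>i<N. p i) \<le> 1/(c*pi) * ln (real N) +
          (1 + 1/(1-\<rho>) + 1/(c*pi) + 2*(2*C/c^2) * (2*pi) powr (\<epsilon> - 1) * (1 + 1/\<epsilon>))"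
proof -
  define K where "K = 2*C/c^2"
  have K0: "0 \<le> K" using C by (simp add: K_def)
  define h1 where "h1 j = 1/(c*(2*pi*real j/real N))" for j :: nat
  define h2 where "h2 j = K * (2*pi*real j/real N) powr (\<epsilon> - 1)" for j :: nat
  have Nr: "real N \<ge> 2" using N by simp
  have S: "(\<Sum>i<N. p i) \<le> 1 + 1/(1-\<rho>) + (2/real N) * (\<Sum>j\<in>{1..<N}. h1 j + h2 j)"
  proof (rule core'[OF N pb])
    fix j show "0 \<le> h1 j + h2 j" using c K0 by (simp add: h1_def h2_def)
  next
    fix j :: nat assume j: "1 \<le> j" "j < N" "2*pi*real j/real N < \<delta>"
    have tp: "0 < 2*pi*real j/real N" using j N by simp
    show "(\<Sum>i<N. r (2*pi*real j/real N) ^ i) \<le> h1 j + h2 j"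
      using geo_one[OF b1 tp j(3)] by (simp add: h1_def h2_def K_def)
  qed auto
  have e1: "(2/real N) * (\<Sum>j\<in>{1..<N}. h1 j) = 1/(c*pi) * (\<Sum>j\<in>{1..<N}. 1/real j)"
    unfolding sum_distrib_left
    by (rule sum.cong) (use Nr c in \<open>auto simp: h1_def field_simps\<close>)
  have s1: "(\<Sum>j\<in>{1..<N}. 1/real j) \<le> 1 + ln (real N)"
  proof -
    have "(\<Sum>j\<in>{1..<N}. 1/real j) \<le> (\<Sum>j\<in>{1..N}. 1/real j)" by (intro sum_mono2) auto
    also have "\<dots> \<le> 1 + ln (real N)" by (rule sum_inv_le_ln) (use N in auto)
    finally show ?thesis .
  qed
  have h2j: "h2 j = K * (2*pi) powr (\<epsilon> - 1) * real N powr (1 - \<epsilon>) * real j powr (-(1-\<epsilon>))" if "1 \<le> j" for j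
  proof -
    have "(2*pi*real j/real N) powr (\<epsilon> - 1) = ((2*pi) powr (\<epsilon> - 1) * real j powr (\<epsilon> - 1)) / real N powr (\<epsilon> - 1)"
      using that Nr by (simp add: powr_divide powr_mult)
    also have "\<dots> = (2*pi) powr (\<epsilon> - 1) * real N powr (1 - \<epsilon>) * real j powr (-(1-\<epsilon>))"
      using powr_minus[of "real N" "1 - \<epsilon>"] by (simp add: divide_inverse)
    finally show ?thesis by (simp add: h2_def)
  qed
  define K2 where "K2 = K * (2*pi) powr (\<epsilon> - 1)"
  have K20: "0 \<le> K2" using K0 by (simp add: K2_def)
  have "(\<Sum>j\<in>{1..<N}. h2 j) = K2 * real N powr (1 - \<epsilon>) * (\<Sum>j\<in>{1..<N}. real j powr (-(1-\<epsilon>)))"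
    by (simp add: h2j sum_distrib_left K2_def mult.assoc)
  moreover have "(\<Sum>j\<in>{1..<N}. real j powr (-(1-\<epsilon>))) \<le> (\<Sum>j\<in>{1..N}. real j powr (-(1-\<epsilon>)))"
    by (intro sum_mono2) auto
  moreover have "(\<Sum>j\<in>{1..N}. real j powr (-(1-\<epsilon>))) \<le> 1 + real N powr (1-(1-\<epsilon>)) / (1-(1-\<epsilon>))"
    by (rule sum_powr_upto) (use \<epsilon> N in auto)
  moreover have "0 \<le> K2 * real N powr (1 - \<epsilon>)" using K20 by simp
  ultimately have "(\<Sum>j\<in>{1..<N}. h2 j) \<le> K2 * real N powr (1 - \<epsilon>) * (1 + real N powr \<epsilon> / \<epsilon>)"
    using mult_left_mono[OF _ \<open>0 \<le> K2 * real N powr (1 - \<epsilon>)\<close>,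
        of "(\<Sum>j\<in>{1..<N}. real j powr (-(1-\<epsilon>)))" "1 + real N powr \<epsilon> / \<epsilon>"]
    by simp
  then have "(2/real N) * (\<Sum>j\<in>{1..<N}. h2 j) \<le> (2/real N) * (K2 * real N powr (1 - \<epsilon>) * (1 + real N powr \<epsilon> / \<epsilon>))"
    using Nr by (intro mult_left_mono) auto
  also have "\<dots> = 2 * K2 * (real N powr (-\<epsilon>) + 1/\<epsilon>)"
  proof -
    define a where "a = real N powr \<epsilon>"
    have a0: "a > 0" using Nr by (simp add: a_def)
    have f1: "real N powr (1 - \<epsilon>) = real N / a" using Nr by (simp add: powr_diff a_def)
    have f2: "real N powr (- \<epsilon>) = 1 / a" using Nr by (simp add: powr_minus a_def divide_inverse)
    show ?thesis unfolding f1 f2 a_def[symmetric] using a0 Nr \<epsilon> by (simp add: divide_simps)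
  qed
  also have "\<dots> \<le> 2 * K2 * (1 + 1/\<epsilon>)"
  proof -
    have "real N powr (-\<epsilon>) \<le> real N powr 0" using Nr \<epsilon> by (intro powr_mono) auto
    then have "real N powr (-\<epsilon>) \<le> 1" using Nr by simp
    then show ?thesis using K20 by (intro mult_left_mono) auto
  qed
  finally have s2: "(2/real N) * (\<Sum>j\<in>{1..<N}. h2 j) \<le> 2 * K2 * (1 + 1/\<epsilon>)" .
  have "(2/real N) * (\<Sum>j\<in>{1..<N}. h1 j + h2 j) = (2/real N) * (\<Sum>j\<in>{1..<N}. h1 j) + (2/real N) * (\<Sum>j\<in>{1..<N}. h2 j)"
    by (simp add: sum.distrib distrib_left)
  also have "\<dots> \<le> 1/(c*pi) * (1 + ln (real N)) + 2 * K2 * (1 + 1/\<epsilon>)"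
    unfolding e1 using s1 s2 c by (intro add_mono mult_left_mono) auto
  finally have X: "(2/real N) * (\<Sum>j\<in>{1..<N}. h1 j + h2 j) \<le> 1/(c*pi) * (1 + ln (real N)) + 2 * K2 * (1 + 1/\<epsilon>)" .
  have q1: "1/(c*pi) * (1 + ln (real N)) = 1/(c*pi) + 1/(c*pi) * ln (real N)" by (simp add: distrib_left)
  have q2: "2 * K2 * (1 + 1/\<epsilon>) = 2*(2*C/c^2) * (2*pi) powr (\<epsilon> - 1) * (1 + 1/\<epsilon>)" by (simp add: K2_def K_def)
  show ?thesis using S X q1 q2 by linarith
qed

end


context rsetup begin

lemma case_gt1:
  assumes b1: "1 < \<beta>" and N: "N \<ge> 2"
    and pb: "\<And>i. i < N \<Longrightarrow> p i \<le> (1/real N) * (\<Sum>m<N. r (2*pi*real m/real N) ^ i)"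
  shows "(\<Sum>i<N. p i) \<le> (3 + 1/(1-\<rho>) + 2 * ((2/c) * (2*pi) powr (-\<beta>)) * 2 powr (\<beta> - 1) / (\<beta> - 1))
             * real N powr ((\<beta> - 1) / \<beta>)"
proof -
  define K0 where "K0 = (2/c) * (2*pi) powr (-\<beta>)"
  have K00: "0 \<le> K0" using c by (simp add: K0_def)
  define h where "h j = min (real N) ((2/c) * (2*pi*real j/real N) powr (-\<beta>))" for j :: nat
  have Nr: "real N \<ge> 2" using N by simp
  have S: "(\<Sum>i<N. p i) \<le> 1 + 1/(1-\<rho>) + (2/real N) * (\<Sum>j\<in>{1..<N}. h j)"
  proof (rule core'[OF N pb])
    fix j show "0 \<le> h j" using c by (simp add: h_def)
  next
    fix j :: nat assume j: "1 \<le> j" "j < N" "2*pi*real j/real N < \<delta>"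
    have tp: "0 < 2*pi*real j/real N" using j N by simp
    have "(\<Sum>i<N. r (2*pi*real j/real N) ^ i) \<le> 2 / (c * (2*pi*real j/real N) powr \<beta>)"
      by (rule geo_half) (use j tp in auto)
    also have "\<dots> = (2/c) * (2*pi*real j/real N) powr (-\<beta>)" unfolding powr_minus by (simp add: divide_inverse)
    finally have a: "(\<Sum>i<N. r (2*pi*real j/real N) ^ i) \<le> (2/c) * (2*pi*real j/real N) powr (-\<beta>)" .
    have b: "(\<Sum>i<N. r (2*pi*real j/real N) ^ i) \<le> real N" by (rule geom_le_n) (use r0 r1 in auto)
    show "(\<Sum>i<N. r (2*pi*real j/real N) ^ i) \<le> h j" using a b by (simp add: h_def)
  qed auto
  have hj: "(2/c) * (2*pi*real j/real N) powr (-\<beta>) = K0 * real N powr \<beta> * real j powr (-\<beta>)" if "1 \<le> j" for j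
  proof -
    have "(2*pi*real j/real N) powr (-\<beta>) = ((2*pi) powr (-\<beta>) * real j powr (-\<beta>)) / real N powr (-\<beta>)"
      using that Nr by (simp add: powr_divide powr_mult)
    also have "\<dots> = (2*pi) powr (-\<beta>) * real j powr (-\<beta>) * real N powr \<beta>"
      by (simp add: powr_minus divide_inverse)
    finally show ?thesis by (simp add: K0_def)
  qed
  define L where "L = real N powr (1 - 1/\<beta>)"
  define J where "J = nat \<lfloor>L\<rfloor>"
  have e01: "0 \<le> 1 - 1/\<beta>" "1 - 1/\<beta> \<le> 1" using b1 by (auto simp: field_simps)
  have L1: "1 \<le> L" unfolding L_def using Nr e01 by (simp add: ge_one_powr_ge_zero)
  have LN: "L \<le> real N"
  proof -
    have "L \<le> real N powr 1" unfolding L_def using Nr e01 by (intro powr_mono) auto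
    then show ?thesis using Nr by simp
  qed
  have JL: "real J \<le> L" unfolding J_def using L1 by simp
  have J1: "1 \<le> J" unfolding J_def using L1 by (simp add: le_nat_floor)
  have JN: "J \<le> N" using JL LN by linarith
  have LJ: "L/2 \<le> real J"
  proof -
    have "L < real J + 1" unfolding J_def using L1 by linarith
    then show ?thesis using J1 by simp
  qed
  have split: "(\<Sum>j\<in>{1..<N}. h j) \<le> (\<Sum>j\<in>{1..J}. h j) + (\<Sum>j\<in>{J<..N}. h j)"
  proof -
    have "(\<Sum>j\<in>{1..<N}. h j) \<le> (\<Sum>j\<in>{1..J} \<union> {J<..N}. h j)"
      by (intro sum_mono2) (use c in \<open>auto simp: h_def\<close>)
    also have "\<dots> = (\<Sum>j\<in>{1..J}. h j) + (\<Sum>j\<in>{J<..N}. h j)"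
      by (intro sum.union_disjoint) auto
    finally show ?thesis .
  qed
  have p1: "(\<Sum>j\<in>{1..J}. h j) \<le> real J * real N"
  proof -
    have "(\<Sum>j\<in>{1..J}. h j) \<le> (\<Sum>j\<in>{1..J}. real N)" by (intro sum_mono) (simp add: h_def)
    then show ?thesis by simp
  qed
  have p2: "(\<Sum>j\<in>{J<..N}. h j) \<le> K0 * real N powr \<beta> * (real J powr (1-\<beta>) / (\<beta> - 1))"
  proof -
    have "(\<Sum>j\<in>{J<..N}. h j) \<le> (\<Sum>j\<in>{J<..N}. K0 * real N powr \<beta> * real j powr (-\<beta>))"
    proof (intro sum_mono)
      fix j assume "j \<in> {J<..N}"
      then have "1 \<le> j" using J1 by auto
      show "h j \<le> K0 * real N powr \<beta> * real j powr (-\<beta>)"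
        unfolding h_def hj[OF \<open>1 \<le> j\<close>, symmetric] by (rule min.cobounded2)
    qed
    also have "\<dots> = K0 * real N powr \<beta> * (\<Sum>j\<in>{J<..N}. real j powr (-\<beta>))"
      by (simp add: sum_distrib_left)
    also have "(\<Sum>j\<in>{J<..N}. real j powr (-\<beta>)) \<le> (real N powr (1-\<beta>) - real J powr (1-\<beta>)) / (1-\<beta>)"
      by (rule sum_powr_le) (use b1 J1 JN in auto)
    also have "\<dots> = (real J powr (1-\<beta>) - real N powr (1-\<beta>)) / (\<beta> - 1)"
    proof -
      have "\<And>x y::real. (x - y)/(1-\<beta>) = (y - x)/(\<beta> - 1)" using b1 by (simp add: field_simps)
      then show ?thesis by blast
    qed
    also have "\<dots> \<le> real J powr (1-\<beta>) / (\<beta> - 1)"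
      using b1 by (intro divide_right_mono) auto
    finally show ?thesis using K00 by (simp add: mult_left_mono)
  qed
  have Jp: "real J powr (1-\<beta>) \<le> 2 powr (\<beta> - 1) * L powr (1-\<beta>)"
  proof -
    have "real J powr (1-\<beta>) \<le> (L/2) powr (1-\<beta>)" using LJ L1 b1 by (intro powr_mono2') auto
    also have "\<dots> = L powr (1-\<beta>) / 2 powr (1-\<beta>)" using L1 by (simp add: powr_divide)
    also have "\<dots> = 2 powr (\<beta> - 1) * L powr (1-\<beta>)"
    proof -
      have "2 powr (-(1-\<beta>)) = 1 / 2 powr (1-\<beta>)" by (rule powr_minus_divide)
      then have "2 powr (\<beta> - 1) = 1 / 2 powr (1-\<beta>)" by simp
      then show ?thesis by simp
    qed
    finally show ?thesis .
  qed
  have NL: "real N powr (\<beta> - 1) * L powr (1-\<beta>) = L"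
  proof -
    have "L powr (1-\<beta>) = real N powr ((1 - 1/\<beta>) * (1-\<beta>))" unfolding L_def using Nr by (simp add: powr_powr)
    then have "real N powr (\<beta> - 1) * L powr (1-\<beta>) = real N powr ((\<beta> - 1) + (1 - 1/\<beta>) * (1-\<beta>))"
      using Nr by (simp add: powr_add)
    also have "(\<beta> - 1) + (1 - 1/\<beta>) * (1-\<beta>) = 1 - 1/\<beta>" using b1 by (simp add: field_simps)
    finally show ?thesis by (simp add: L_def)
  qed
  define K3 where "K3 = 2 * K0 * 2 powr (\<beta> - 1) / (\<beta> - 1)"
  have "(2/real N) * (\<Sum>j\<in>{1..<N}. h j) \<le> (2/real N) * (real J * real N + K0 * real N powr \<beta> * (real J powr (1-\<beta>) / (\<beta> - 1)))"
    using split p1 p2 Nr by (intro mult_left_mono) auto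
  also have "\<dots> = 2 * real J + 2 * K0 * real N powr (\<beta> - 1) * real J powr (1-\<beta>) / (\<beta> - 1)"
  proof -
    define a where "a = real N powr \<beta>"
    have e1: "real N powr (\<beta> - 1) = a / real N" using Nr by (simp add: powr_diff a_def)
    have "\<And>Y. (2/real N) * (real J * real N + K0 * a * (Y / (\<beta> - 1))) = 2 * real J + 2 * K0 * (a / real N) * Y / (\<beta> - 1)"
      using Nr b1 by (simp add: field_simps)
    then show ?thesis unfolding e1 a_def[symmetric] by blast
  qed
  also have "\<dots> \<le> 2 * L + 2 * K0 * real N powr (\<beta> - 1) * (2 powr (\<beta> - 1) * L powr (1-\<beta>)) / (\<beta> - 1)"
    using JL Jp K00 b1 by (intro add_mono divide_right_mono mult_left_mono) auto
  also have "\<dots> = 2 * L + K3 * L"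
  proof -
    have "\<And>X Y P::real. 2 * K0 * X * (P * Y) / (\<beta> - 1) = (2 * K0 * P / (\<beta> - 1)) * (X * Y)"
      by (simp add: field_simps)
    then show ?thesis using NL by (simp add: K3_def)
  qed
  finally have T: "(2/real N) * (\<Sum>j\<in>{1..<N}. h j) \<le> 2 * L + K3 * L" .
  have "0 \<le> 1 + 1/(1-\<rho>)" using \<rho> by simp
  then have "(1 + 1/(1-\<rho>)) * 1 \<le> (1 + 1/(1-\<rho>)) * L" using L1 by (intro mult_left_mono) auto
  then have "1 + 1/(1-\<rho>) \<le> (1 + 1/(1-\<rho>)) * L" by simp
  with S T have "(\<Sum>i<N. p i) \<le> (3 + 1/(1-\<rho>) + K3) * L" by (simp add: algebra_simps)
  moreover have "L = real N powr ((\<beta> - 1) / \<beta>)" unfolding L_def using b1 by (simp add: diff_divide_distrib)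
  ultimately show ?thesis by (simp add: K3_def K0_def)
qed

end


definition psi :: "'a measure \<Rightarrow> ('a \<Rightarrow> int) \<Rightarrow> real \<Rightarrow> complex" where
  "psi M Y t = (CLINT \<omega>|M. exp (\<i> * of_real (t * of_int (Y \<omega>))))"

lemma int_meas_borel:
  fixes Y :: "'a \<Rightarrow> int"
  assumes "Y \<in> measurable M (count_space UNIV)" shows "Y \<in> borel_measurable M"
  using assms by (subst measurable_cong_sets[OF refl sets_borel_eq_count_space]) simp

lemma any_int_fun_meas:
  fixes Y :: "'a \<Rightarrow> int" and g :: "int \<Rightarrow> 'b::topological_space"
  assumes "Y \<in> borel_measurable M" shows "(\<lambda>\<omega>. g (Y \<omega>)) \<in> borel_measurable M"
proof -
  have "g \<in> borel_measurable (borel :: int measure)"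
    by (subst measurable_cong_sets[OF sets_borel_eq_count_space refl]) simp
  then show ?thesis using measurable_compose[OF assms] by blast
qed

locale prob_Y = prob_space +
  fixes Y :: "'a \<Rightarrow> int"
  assumes Ym: "Y \<in> borel_measurable M"
begin

definition "pk k = measure M {\<omega> \<in> space M. Y \<omega> = k}"

lemma gY: "(\<lambda>\<omega>. g (Y \<omega>)) \<in> borel_measurable M" by (rule any_int_fun_meas[OF Ym])

lemma integrable_gY:
  fixes g :: "int \<Rightarrow> 'b::{banach,second_countable_topology}"
  assumes "\<And>k. norm (g k) \<le> B" shows "integrable M (\<lambda>\<omega>. g (Y \<omega>))"
  by (rule integrable_const_bound[of _ B]) (use assms gY in auto)

lemma norm_cexp: "norm (exp (\<i> * of_real x)) = 1" by (simp add: norm_exp_i_times)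

lemma psi_int: "integrable M (\<lambda>\<omega>. exp (\<i> * of_real (t * of_int (Y \<omega>))))"
  using integrable_gY[of "\<lambda>k. exp (\<i> * of_real (t * of_int k))" 1] by (simp add: norm_cexp)

lemma psi_le1: "norm (psi M Y t) \<le> 1"
proof -
  have "norm (psi M Y t) \<le> (\<integral>\<omega>. norm (exp (\<i> * of_real (t * of_int (Y \<omega>)))) \<partial>M)"
    unfolding psi_def by (rule integral_norm_bound)
  also have "\<dots> = 1" by (simp add: norm_cexp prob_space)
  finally show ?thesis .
qed

lemma psi_sym: "psi M Y (2*pi - t) = cnj (psi M Y t)"
proof -
  have "exp (\<i> * of_real ((2*pi - t) * of_int k)) = cnj (exp (\<i> * of_real (t * of_int k)))" for k :: int
  proof -
    have a: "cis (- (t * of_int k)) * cis (2 * pi * of_int k) = cis (- (t * of_int k) + 2 * pi * of_int k)"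
      by (rule cis_mult)
    have b: "cis (2 * pi * of_int k) = 1" by (rule cis_multiple_2pi) simp
    have c: "exp (\<i> * of_real ((2*pi - t) * of_int k)) = cis (- (t * of_int k) + 2 * pi * of_int k)"
      by (simp add: cis_conv_exp algebra_simps)
    have d: "cis (- (t * of_int k)) = cnj (cis (t * of_int k))" by (simp add: cis_cnj)
    have "exp (\<i> * of_real ((2*pi - t) * of_int k)) = cnj (cis (t * of_int k))"
      using a b c d by simp
    then show ?thesis by (simp add: cis_conv_exp)
  qed
  then show ?thesis unfolding psi_def by simp
qed

lemma int_ind:
  assumes "finite F"
  shows "(CLINT \<omega>|M. exp (\<i> * of_real (t * of_int (Y \<omega>))) * of_real (indicator {\<omega>. Y \<omega> \<in> F} \<omega>))
       = (\<Sum>k\<in>F. exp (\<i> * of_real (t * of_int k)) * of_real (pk k))"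
proof -
  have pw: "exp (\<i> * of_real (t * of_int (Y \<omega>))) * of_real (indicator {\<omega>. Y \<omega> \<in> F} \<omega>)
      = (\<Sum>k\<in>F. exp (\<i> * of_real (t * of_int k)) * of_real (indicator {\<omega>. Y \<omega> = k} \<omega>))" for \<omega>
  proof -
    have "(\<Sum>k\<in>F. exp (\<i> * of_real (t * of_int k)) * of_real (indicator {\<omega>. Y \<omega> = k} \<omega>))
        = (\<Sum>k\<in>F. if Y \<omega> = k then exp (\<i> * of_real (t * of_int k)) else 0)"
      by (intro sum.cong) (auto simp: indicator_def)
    also have "\<dots> = (if Y \<omega> \<in> F then exp (\<i> * of_real (t * of_int (Y \<omega>))) else 0)"
      using assms by (simp add: sum.delta)
    finally show ?thesis by (simp add: indicator_def)
  qed
  have ii: "integrable M (\<lambda>\<omega>. exp (\<i> * of_real (t * of_int k)) * complex_of_real (indicator {\<omega>. Y \<omega> = k} \<omega>))" for k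
    using integrable_gY[of "\<lambda>j. exp (\<i> * of_real (t * of_int k)) * complex_of_real (indicator {k} j)" 1]
    by (simp add: norm_mult norm_cexp indicator_def)
  have ms: "{\<omega>. Y \<omega> = k} \<inter> space M = {\<omega> \<in> space M. Y \<omega> = k}" for k by auto
  have "(CLINT \<omega>|M. (\<Sum>k\<in>F. exp (\<i> * of_real (t * of_int k)) * of_real (indicator {\<omega>. Y \<omega> = k} \<omega>)))
     = (\<Sum>k\<in>F. CLINT \<omega>|M. exp (\<i> * of_real (t * of_int k)) * of_real (indicator {\<omega>. Y \<omega> = k} \<omega>))"
    by (rule Bochner_Integration.integral_sum) (rule ii)
  also have "\<dots> = (\<Sum>k\<in>F. exp (\<i> * of_real (t * of_int k)) * of_real (pk k))"
  proof (rule sum.cong[OF refl])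
    fix k
    have "(CLINT \<omega>|M. exp (\<i> * of_real (t * of_int k)) * of_real (indicator {\<omega>. Y \<omega> = k} \<omega>))
        = exp (\<i> * of_real (t * of_int k)) * (CLINT \<omega>|M. of_real (indicator {\<omega>. Y \<omega> = k} \<omega>))"
      by (rule integral_mult_right_zero)
    also have "(CLINT \<omega>|M. of_real (indicator {\<omega>. Y \<omega> = k} \<omega>)) = of_real (pk k)"
      by (simp add: pk_def ms)
    finally show "(CLINT \<omega>|M. exp (\<i> * of_real (t * of_int k)) * of_real (indicator {\<omega>. Y \<omega> = k} \<omega>))
        = exp (\<i> * of_real (t * of_int k)) * of_real (pk k)" .
  qed
  finally show ?thesis unfolding pw .
qed

lemma tail_bound:
  assumes "finite F"
  shows "norm (psi M Y t - (\<Sum>k\<in>F. exp (\<i> * of_real (t * of_int k)) * of_real (pk k)))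
          \<le> measure M {\<omega> \<in> space M. Y \<omega> \<notin> F}"
proof -
  have i2: "integrable M (\<lambda>\<omega>. exp (\<i> * of_real (t * of_int (Y \<omega>))) * of_real (indicator {\<omega>. Y \<omega> \<in> F} \<omega>))"
    using integrable_gY[of "\<lambda>j. exp (\<i> * of_real (t * of_int j)) * complex_of_real (indicator F j)" 1]
    by (simp add: norm_mult norm_cexp indicator_def)
  have "psi M Y t - (\<Sum>k\<in>F. exp (\<i> * of_real (t * of_int k)) * of_real (pk k))
      = (CLINT \<omega>|M. exp (\<i> * of_real (t * of_int (Y \<omega>))) - exp (\<i> * of_real (t * of_int (Y \<omega>))) * of_real (indicator {\<omega>. Y \<omega> \<in> F} \<omega>))"
    unfolding int_ind[OF assms, symmetric] psi_def by (rule Bochner_Integration.integral_diff[symmetric]) (use psi_int i2 in auto)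
  also have "\<dots> = (CLINT \<omega>|M. exp (\<i> * of_real (t * of_int (Y \<omega>))) * of_real (indicator {\<omega>. Y \<omega> \<notin> F} \<omega>))"
    by (intro Bochner_Integration.integral_cong) (auto simp: indicator_def)
  finally have e: "psi M Y t - (\<Sum>k\<in>F. exp (\<i> * of_real (t * of_int k)) * of_real (pk k))
      = (CLINT \<omega>|M. exp (\<i> * of_real (t * of_int (Y \<omega>))) * of_real (indicator {\<omega>. Y \<omega> \<notin> F} \<omega>))" .
  have "norm (CLINT \<omega>|M. exp (\<i> * of_real (t * of_int (Y \<omega>))) * of_real (indicator {\<omega>. Y \<omega> \<notin> F} \<omega>))
      \<le> (\<integral>\<omega>. norm (exp (\<i> * of_real (t * of_int (Y \<omega>))) * of_real (indicator {\<omega>. Y \<omega> \<notin> F} \<omega>)) \<partial>M)"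
    by (rule integral_norm_bound)
  also have "\<dots> = (\<integral>\<omega>. indicator {\<omega>. Y \<omega> \<notin> F} \<omega> \<partial>M)"
    by (intro Bochner_Integration.integral_cong) (auto simp: norm_mult norm_cexp indicator_def)
  also have "\<dots> = measure M {\<omega> \<in> space M. Y \<omega> \<notin> F}"
    by (simp add: Int_def conj_commute)
  finally show ?thesis using e by simp
qed

lemma tail_small:
  assumes "e > 0" shows "\<exists>n::nat. measure M {\<omega> \<in> space M. Y \<omega> \<notin> {- int n..int n}} < e"
proof -
  define A where "A n = {\<omega> \<in> space M. Y \<omega> \<notin> {- int n..int n}}" for n :: nat
  have As: "range A \<subseteq> sets M"
  proof -
    have "A n = (\<lambda>\<omega>. indicator {- int n..int n} (Y \<omega>) :: real) -` {0} \<inter> space M" for n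
      by (auto simp: A_def indicator_def)
    moreover have "(\<lambda>\<omega>. indicator {- int n..int n} (Y \<omega>) :: real) -` {0} \<inter> space M \<in> sets M" for n
      using gY[of "\<lambda>j. indicator {- int n..int n} j :: real"] by (intro borel_measurable_vimage) simp
    ultimately show ?thesis by auto
  qed
  have dec: "decseq A" unfolding decseq_def A_def by auto
  have "(\<Inter>n. A n) = {}"
  proof -
    have "\<omega> \<notin> A (nat \<bar>Y \<omega>\<bar>)" for \<omega> by (auto simp: A_def)
    then show ?thesis by blast
  qed
  then have "(\<lambda>n. measure M (A n)) \<longlonglongrightarrow> 0"
    using finite_Lim_measure_decseq[OF As dec] by simp
  then obtain n where "norm (measure M (A n) - 0) < e" using assms by (auto dest!: LIMSEQ_D)
  then show ?thesis by (auto simp: A_def)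
qed

lemma psi_has_sum: "((\<lambda>k. exp (\<i> * of_real (t * of_int k)) * of_real (pk k)) has_sum psi M Y t) UNIV"
  unfolding has_sum_def
proof (rule tendstoI)
  fix e :: real assume e: "e > 0"
  obtain n :: nat where n: "measure M {\<omega> \<in> space M. Y \<omega> \<notin> {- int n..int n}} < e"
    using tail_small[OF e] by blast
  show "eventually (\<lambda>F. dist (\<Sum>k\<in>F. exp (\<i> * of_real (t * of_int k)) * of_real (pk k)) (psi M Y t) < e)
          (finite_subsets_at_top UNIV)"
    unfolding eventually_finite_subsets_at_top
  proof (intro exI[of _ "{- int n..int n}"] conjI allI impI)
    fix F assume F: "finite F \<and> {- int n..int n} \<subseteq> F \<and> F \<subseteq> UNIV"
    have "dist (\<Sum>k\<in>F. exp (\<i> * of_real (t * of_int k)) * of_real (pk k)) (psi M Y t)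
        \<le> measure M {\<omega> \<in> space M. Y \<omega> \<notin> F}"
      using tail_bound[of F t] F by (simp add: dist_norm norm_minus_commute)
    also have "\<dots> \<le> measure M {\<omega> \<in> space M. Y \<omega> \<notin> {- int n..int n}}"
    proof (rule finite_measure_mono)
      show "{\<omega> \<in> space M. Y \<omega> \<notin> F} \<subseteq> {\<omega> \<in> space M. Y \<omega> \<notin> {- int n..int n}}" using F by auto
      have "{\<omega> \<in> space M. Y \<omega> \<notin> {- int n..int n}} = (\<lambda>\<omega>. indicator {- int n..int n} (Y \<omega>) :: real) -` {0} \<inter> space M"
        by (auto simp: indicator_def)
      also have "\<dots> \<in> sets M" using gY[of "\<lambda>j. indicator {- int n..int n} j :: real"] by (intro borel_measurable_vimage) simp
      finally show "{\<omega> \<in> space M. Y \<omega> \<notin> {- int n..int n}} \<in> sets M" .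
    qed
    finally show "dist (\<Sum>k\<in>F. exp (\<i> * of_real (t * of_int k)) * of_real (pk k)) (psi M Y t) < e"
      using n by linarith
  qed auto
qed

end


context prob_Y begin

lemma setY: "{\<omega> \<in> space M. P (Y \<omega>)} \<in> sets M"
proof -
  have "{\<omega> \<in> space M. P (Y \<omega>)} = (\<lambda>\<omega>. indicator {k. P k} (Y \<omega>) :: real) -` {1} \<inter> space M"
    by (auto simp: indicator_def)
  also have "\<dots> \<in> sets M" using gY[of "\<lambda>j. indicator {k. P k} j :: real"] by (intro borel_measurable_vimage) simp
  finally show ?thesis .
qed

lemma pk_nonneg: "0 \<le> pk k" by (simp add: pk_def)

lemma meas_in: assumes "finite K"
  shows "measure M {\<omega> \<in> space M. Y \<omega> \<in> K} = (\<Sum>k\<in>K. pk k)"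
proof -
  have "complex_of_real (measure M {\<omega> \<in> space M. Y \<omega> \<in> K}) =
      (CLINT \<omega>|M. exp (\<i> * of_real (0 * of_int (Y \<omega>))) * of_real (indicator {\<omega>. Y \<omega> \<in> K} \<omega>))"
  proof -
    have "{\<omega>. Y \<omega> \<in> K} \<inter> space M = {\<omega> \<in> space M. Y \<omega> \<in> K}" by auto
    then show ?thesis by simp
  qed
  also have "\<dots> = (\<Sum>k\<in>K. exp (\<i> * of_real (0 * of_int k)) * of_real (pk k))" by (rule int_ind[OF assms])
  also have "\<dots> = complex_of_real (\<Sum>k\<in>K. pk k)" by simp
  finally show ?thesis by (simp only: of_real_eq_iff)
qed

lemma meas_notin: assumes "finite K"
  shows "measure M {\<omega> \<in> space M. Y \<omega> \<notin> K} = 1 - (\<Sum>k\<in>K. pk k)"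
proof -
  have "{\<omega> \<in> space M. Y \<omega> \<notin> K} = space M - {\<omega> \<in> space M. Y \<omega> \<in> K}" by auto
  then show ?thesis using prob_compl[OF setY[of "\<lambda>k. k \<in> K"]] meas_in[OF assms] by simp
qed

lemma norm_sq_sum:
  fixes K :: "int set" and t :: real
  shows "(cmod (\<Sum>k\<in>K. exp (\<i> * of_real (t * of_int k)) * of_real (pk k)))^2
     = (\<Sum>j\<in>K. \<Sum>k\<in>K. pk j * pk k * cos (t * (of_int j - of_int k)))"
proof -
  define Z where "Z = (\<Sum>k\<in>K. exp (\<i> * of_real (t * of_int k)) * of_real (pk k))"
  have ec: "\<And>x. exp (\<i> * complex_of_real x) = cis x" by (simp add: cis_conv_exp)
  have ReZ: "Re Z = (\<Sum>k\<in>K. pk k * cos (t * of_int k))"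
    unfolding Z_def ec Re_sum by (intro sum.cong) auto
  have ImZ: "Im Z = (\<Sum>k\<in>K. pk k * sin (t * of_int k))"
    unfolding Z_def ec Im_sum by (intro sum.cong) auto
  have "(cmod Z)^2 = (Re Z)^2 + (Im Z)^2" by (simp add: cmod_power2)
  also have "\<dots> = (\<Sum>j\<in>K. \<Sum>k\<in>K. pk j * pk k * (cos (t * of_int j) * cos (t * of_int k) + sin (t * of_int j) * sin (t * of_int k)))"
    unfolding ReZ ImZ power2_eq_square sum_product
    by (simp add: sum.distrib[symmetric] algebra_simps)
  also have "\<dots> = (\<Sum>j\<in>K. \<Sum>k\<in>K. pk j * pk k * cos (t * (of_int j - of_int k)))"
    by (simp add: cos_diff right_diff_distrib)
  finally show ?thesis by (simp add: Z_def)
qed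

lemma key_ineq:
  assumes F: "finite F" and p0: "pk k0 > 0"
  shows "cmod (psi M Y t) \<le> 1 - pk k0 * (\<Sum>s\<in>F. pk (s + k0) * (1 - cos (t * of_int s))) / 2"
proof -
  define K where "K = insert k0 ((\<lambda>s. s + k0) ` F)"
  have Kf: "finite K" using F by (simp add: K_def)
  define Z where "Z = (\<Sum>k\<in>K. exp (\<i> * of_real (t * of_int k)) * of_real (pk k))"
  define s where "s = (\<Sum>k\<in>K. pk k)"
  have tb: "cmod (psi M Y t) \<le> cmod Z + (1 - s)"
  proof -
    have "cmod (psi M Y t) \<le> cmod Z + cmod (psi M Y t - Z)" by (rule norm_triangle_sub)
    moreover have "cmod (psi M Y t - Z) \<le> 1 - s"
      using tail_bound[OF Kf, of t] meas_notin[OF Kf] by (simp add: Z_def s_def)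
    ultimately show ?thesis by linarith
  qed
  have Zs: "cmod Z \<le> s"
  proof -
    have "cmod Z \<le> (\<Sum>k\<in>K. cmod (exp (\<i> * of_real (t * of_int k)) * of_real (pk k)))"
      unfolding Z_def by (rule norm_sum)
    also have "\<dots> = s" unfolding s_def by (intro sum.cong) (auto simp: norm_mult norm_cexp pk_nonneg)
    finally show ?thesis .
  qed
  have s1: "s \<le> 1"
  proof -
    have "s = measure M {\<omega> \<in> space M. Y \<omega> \<in> K}" using meas_in[OF Kf] by (simp add: s_def)
    also have "\<dots> \<le> 1" by simp
    finally show ?thesis .
  qed
  have diff: "s^2 - (cmod Z)^2 = (\<Sum>j\<in>K. \<Sum>k\<in>K. pk j * pk k * (1 - cos (t * (of_int j - of_int k))))"
  proof -
    have "s^2 = (\<Sum>j\<in>K. \<Sum>k\<in>K. pk j * pk k)" unfolding s_def power2_eq_square sum_product by simp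
    then show ?thesis unfolding Z_def norm_sq_sum
      by (simp add: sum_subtractf[symmetric] right_diff_distrib)
  qed
  have nn: "0 \<le> pk j * pk k * (1 - cos (t * (of_int j - of_int k)))" for j k
    using pk_nonneg by simp
  have "(\<Sum>k\<in>K. pk k0 * pk k * (1 - cos (t * (of_int k0 - of_int k)))) \<le>
      (\<Sum>j\<in>K. \<Sum>k\<in>K. pk j * pk k * (1 - cos (t * (of_int j - of_int k))))"
    by (rule member_le_sum[of k0 K "\<lambda>j. \<Sum>k\<in>K. pk j * pk k * (1 - cos (t * (of_int j - of_int k)))"])
       (use Kf in \<open>auto simp: K_def intro: sum_nonneg nn\<close>)
  moreover have "(\<Sum>k\<in>(\<lambda>s. s + k0) ` F. pk k0 * pk k * (1 - cos (t * (of_int k0 - of_int k))))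
      \<le> (\<Sum>k\<in>K. pk k0 * pk k * (1 - cos (t * (of_int k0 - of_int k))))"
    by (rule sum_mono2) (auto simp: K_def Kf nn F)
  moreover have "(\<Sum>k\<in>(\<lambda>s. s + k0) ` F. pk k0 * pk k * (1 - cos (t * (of_int k0 - of_int k))))
      = pk k0 * (\<Sum>s\<in>F. pk (s + k0) * (1 - cos (t * of_int s)))"
    by (subst sum.reindex) (auto simp: inj_on_def sum_distrib_left mult.assoc)
  ultimately have low: "pk k0 * (\<Sum>s\<in>F. pk (s + k0) * (1 - cos (t * of_int s))) \<le> s^2 - (cmod Z)^2"
    using diff by linarith
  have "s^2 - (cmod Z)^2 = (s - cmod Z) * (s + cmod Z)" by (simp add: power2_eq_square algebra_simps)
  also have "\<dots> \<le> (s - cmod Z) * 2" using Zs s1 by (intro mult_left_mono) auto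
  finally have "s^2 - (cmod Z)^2 \<le> (s - cmod Z) * 2" .
  moreover have "(s - cmod Z) * 2 = 2 * s - 2 * cmod Z" by simp
  ultimately show ?thesis using low tb by linarith
qed

lemma far_bound:
  assumes F: "finite F" and p0: "pk k0 > 0" and pF: "\<And>s. s \<in> F \<Longrightarrow> pk (s + k0) > 0"
    and comb: "1 = (\<Sum>s\<in>F. a s * s)"
    and \<delta>: "0 < \<delta>" "\<delta> < pi"
  shows "\<exists>\<rho>. 0 \<le> \<rho> \<and> \<rho> < 1 \<and> (\<forall>t. \<delta> \<le> t \<longrightarrow> t \<le> 2*pi - \<delta> \<longrightarrow> cmod (psi M Y t) \<le> \<rho>)"
proof -
  define G where "G t = (\<Sum>s\<in>F. pk (s + k0) * (1 - cos (t * of_int s)))" for t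
  have Gpos: "G t > 0" if t: "\<delta> \<le> t" "t \<le> 2*pi - \<delta>" for t
  proof (rule ccontr)
    assume "\<not> G t > 0"
    moreover have "G t \<ge> 0" unfolding G_def by (intro sum_nonneg) (simp add: pk_nonneg)
    ultimately have "G t = 0" by simp
    then have "\<forall>s\<in>F. pk (s + k0) * (1 - cos (t * of_int s)) = 0"
      unfolding G_def by (subst sum_nonneg_eq_0_iff[symmetric]) (auto simp: F pk_nonneg)
    then have "\<forall>s\<in>F. cos (t * of_int s) = 1"
    proof (intro ballI)
      fix s assume "\<forall>s\<in>F. pk (s + k0) * (1 - cos (t * of_int s)) = 0" "s \<in> F"
      then have "pk (s + k0) * (1 - cos (t * of_int s)) = 0" by auto
      moreover have "pk (s + k0) \<noteq> 0" using pF[OF \<open>s \<in> F\<close>] by simp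
      ultimately show "cos (t * of_int s) = 1" by simp
    qed
    then have "\<forall>s\<in>F. \<exists>n::int. t * of_int s = of_int n * 2 * pi" by (simp add: cos_one_2pi_int)
    then obtain n where n: "\<And>s. s \<in> F \<Longrightarrow> t * of_int s = of_int (n s) * 2 * pi" by metis
    have "t = t * of_int (\<Sum>s\<in>F. a s * s)" using comb by simp
    also have "\<dots> = (\<Sum>s\<in>F. of_int (a s) * (t * of_int s))" by (simp add: sum_distrib_left algebra_simps)
    also have "\<dots> = (\<Sum>s\<in>F. of_int (a s) * (of_int (n s) * 2 * pi))" by (intro sum.cong) (auto simp: n)
    also have "\<dots> = (\<Sum>s\<in>F. of_int (a s * n s) * (2 * pi))" by (intro sum.cong) auto
    also have "\<dots> = of_int (\<Sum>s\<in>F. a s * n s) * (2 * pi)" by (simp only: sum_distrib_right of_int_sum)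
    finally have tm: "t = of_int (\<Sum>s\<in>F. a s * n s) * (2 * pi)" .
    define m where "m = (\<Sum>s\<in>F. a s * n s)"
    have tm': "t = of_int m * (2*pi)" using tm by (simp only: m_def)
    have "0 < of_int m * (2*pi)" using tm' t \<delta> by linarith
    then have "0 < m" by (simp add: zero_less_mult_iff)
    moreover have "of_int m * (2*pi) < 1 * (2*pi)" using tm' t \<delta> by linarith
    then have "m < 1" by (subst (asm) mult_less_cancel_right) auto
    ultimately show False by simp
  qed
  have cont: "continuous_on {\<delta>..2*pi - \<delta>} G" unfolding G_def by (intro continuous_intros)
  obtain t0 where t0: "t0 \<in> {\<delta>..2*pi - \<delta>}" and mn: "\<forall>t\<in>{\<delta>..2*pi - \<delta>}. G t0 \<le> G t"
    using continuous_attains_inf[OF compact_Icc _ cont] \<delta> by auto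
  define \<rho> where "\<rho> = 1 - pk k0 * G t0 / 2"
  have G0: "G t0 > 0" using Gpos t0 by auto
  have bnd: "cmod (psi M Y t) \<le> \<rho>" if "\<delta> \<le> t" "t \<le> 2*pi - \<delta>" for t
  proof -
    have "cmod (psi M Y t) \<le> 1 - pk k0 * G t / 2" using key_ineq[OF F p0, of t] by (simp add: G_def)
    also have "\<dots> \<le> \<rho>" unfolding \<rho>_def using mn that p0 by (auto intro: mult_left_mono)
    finally show ?thesis .
  qed
  have "0 \<le> cmod (psi M Y t0)" by simp
  moreover have "cmod (psi M Y t0) \<le> \<rho>" using t0 by (intro bnd) auto
  ultimately have "0 \<le> \<rho>" by linarith
  moreover have "\<rho> < 1" using G0 p0 by (simp add: \<rho>_def)
  ultimately show ?thesis using bnd by blast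
qed

end


lemma roots_sum:
  fixes d :: int and N :: nat assumes N: "N \<ge> 1"
  shows "(\<Sum>m<N. cis (2 * pi * real m * of_int d/real N)) = (if int N dvd d then of_nat N else 0)"
proof -
  define z where "z = cis (2 * pi * of_int d/real N)"
  have zm: "cis (2 * pi * real m * of_int d/real N) = z ^ m" for m
  proof -
    have "cis (2 * pi * real m * of_int d/real N) = cis (real m * (2 * pi * of_int d/real N))"
      by (simp add: algebra_simps)
    also have "\<dots> = z ^ m" unfolding z_def by (rule Complex.DeMoivre[symmetric])
    finally show ?thesis .
  qed
  show ?thesis
  proof (cases "int N dvd d")
    case True
    then obtain q where q: "d = int N * q" by blast
    have "2 * pi * of_int d / real N = 2 * pi * of_int q" unfolding q using N by simp
    then have "z = cis (2 * pi * of_int q)" unfolding z_def by simp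
    also have "\<dots> = 1" by (rule cis_multiple_2pi) simp
    finally show ?thesis using True by (simp add: zm)
  next
    case False
    have z1: "z \<noteq> 1"
    proof
      assume "z = 1"
      then have "cos (2 * pi * of_int d/real N) = 1" unfolding z_def by (metis cis.sel(1) one_complex.sel(1))
      then obtain k :: int where k: "2 * pi * of_int d/real N = of_int k * 2 * pi" by (auto simp: cos_one_2pi_int)
      then have "of_int d = real N * of_int k" using N by (simp add: field_simps)
      then have "d = int N * k" by (metis of_int_eq_iff of_int_mult of_int_of_nat_eq)
      then show False using False by simp
    qed
    have zN: "z ^ N = 1"
    proof -
      have "z ^ N = cis (real N * (2 * pi * of_int d/real N))" unfolding z_def by (rule Complex.DeMoivre)
      also have "\<dots> = cis (2 * pi * of_int d)" using N by simp
      also have "\<dots> = 1" by (rule cis_multiple_2pi) simp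
      finally show ?thesis .
    qed
    have "(\<Sum>m<N. z ^ m) = (1 - z ^ N) / (1 - z)" using z1 by (simp add: sum_gp_strict)
    then show ?thesis using False zN by (simp add: zm)
  qed
qed

lemma res_class_iff: "s \<in> res_class y N \<longleftrightarrow> int N dvd (s - y)"
  unfolding res_class_def by (auto simp: dvd_def algebra_simps) 


locale iidX = prob_space +
  fixes X :: "nat \<Rightarrow> 'a \<Rightarrow> int"
  assumes indep: "indep_vars (\<lambda>_. count_space UNIV) X {1..}"
    and ident: "\<And>j. j \<ge> 1 \<Longrightarrow> distr M (count_space UNIV) (X j) = distr M (count_space UNIV) (X 1)"
begin

lemma Xm: "j \<ge> 1 \<Longrightarrow> X j \<in> measurable M (count_space UNIV)"
  using indep by (auto simp: indep_vars_def)

lemma Xb: "j \<ge> 1 \<Longrightarrow> X j \<in> borel_measurable M"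
  by (rule int_meas_borel[OF Xm])

lemma charXj: assumes j: "j \<ge> 1"
  shows "(CLINT \<omega>|M. exp (\<i> * of_real (t * of_int (X j \<omega>)))) = psi M (X 1) t"
proof -
  have g: "(\<lambda>k::int. exp (\<i> * of_real (t * of_int k))) \<in> borel_measurable (count_space UNIV)" by simp
  have "(CLINT \<omega>|M. exp (\<i> * of_real (t * of_int (X j \<omega>))))
      = integral\<^sup>L (distr M (count_space UNIV) (X j)) (\<lambda>k::int. exp (\<i> * of_real (t * of_int k)))"
    by (rule integral_distr[OF Xm[OF j] g, symmetric])
  also have "\<dots> = integral\<^sup>L (distr M (count_space UNIV) (X 1)) (\<lambda>k::int. exp (\<i> * of_real (t * of_int k)))"
    using ident[OF j] by simp
  also have "\<dots> = (CLINT \<omega>|M. exp (\<i> * of_real (t * of_int (X 1 \<omega>))))"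
    by (rule integral_distr[OF Xm g]) simp
  finally show ?thesis by (simp add: psi_def)
qed

lemma charS: "(CLINT \<omega>|M. exp (\<i> * of_real (t * of_int (partial_sum X n \<omega>)))) = psi M (X 1) t ^ n"
proof -
  define Z where "Z j \<omega> = exp (\<i> * of_real (t * of_int (X j \<omega>)))" for j \<omega>
  have pw: "exp (\<i> * of_real (t * of_int (partial_sum X n \<omega>))) = (\<Prod>j\<in>{1..n}. Z j \<omega>)" for \<omega>
  proof -
    have "\<i> * of_real (t * of_int (partial_sum X n \<omega>)) = (\<Sum>j\<in>{1..n}. \<i> * of_real (t * of_int (X j \<omega>)))"
      by (simp add: partial_sum_def sum_distrib_left)
    then show ?thesis by (simp add: exp_sum Z_def)
  qed
  have ind: "indep_vars (\<lambda>_. borel) Z {1..n}"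
    unfolding Z_def
    by (rule indep_vars_compose2[OF indep_vars_subset[OF indep]]) auto
  have intZ: "integrable M (Z j)" if "j \<in> {1..n}" for j
  proof -
    interpret Yj: prob_Y M "X j" by unfold_locales (use that Xb in auto)
    show ?thesis unfolding Z_def by (rule Yj.psi_int)
  qed
  have "(CLINT \<omega>|M. exp (\<i> * of_real (t * of_int (partial_sum X n \<omega>)))) = (CLINT \<omega>|M. (\<Prod>j\<in>{1..n}. Z j \<omega>))"
    by (simp only: pw)
  also have "\<dots> = (\<Prod>j\<in>{1..n}. CLINT \<omega>|M. Z j \<omega>)"
    by (rule indep_vars_lebesgue_integral[OF _ ind intZ]) auto
  also have "\<dots> = (\<Prod>j\<in>{1..n}. psi M (X 1) t)"
  proof (rule prod.cong[OF refl])
    fix j assume "j \<in> {1..n}"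
    then show "(CLINT \<omega>|M. Z j \<omega>) = psi M (X 1) t" unfolding Z_def by (intro charXj) auto
  qed
  finally show ?thesis by simp
qed

lemma Sb: "partial_sum X n \<in> borel_measurable M"
proof -
  have RS: "(\<lambda>\<omega>. real_of_int (partial_sum X n \<omega>)) \<in> borel_measurable M"
  proof -
    have "(\<lambda>\<omega>. \<Sum>j\<in>{1..n}. real_of_int (X j \<omega>)) \<in> borel_measurable M"
      by (rule borel_measurable_sum) (use any_int_fun_meas[OF Xb] in auto)
    then show ?thesis by (simp add: partial_sum_def)
  qed
  have "partial_sum X n \<in> measurable M (count_space UNIV)"
  proof (subst measurable_count_space_eq2_countable, intro conjI ballI)
    fix a :: int
    have "partial_sum X n -` {a} \<inter> space M = (\<lambda>\<omega>. real_of_int (partial_sum X n \<omega>)) -` {real_of_int a} \<inter> space M"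
      by auto
    also have "\<dots> \<in> sets M" using RS by (rule borel_measurable_vimage)
    finally show "partial_sum X n -` {a} \<inter> space M \<in> sets M" .
  qed auto
  then show ?thesis by (rule int_meas_borel)
qed

lemma probS:
  assumes N: "N \<ge> 1"
  shows "measure M {\<omega> \<in> space M. partial_sum X n \<omega> \<in> res_class y N}
          \<le> (1/real N) * (\<Sum>m<N. cmod (psi M (X 1) (2 * pi * real m/real N)) ^ n)"
proof -
  define S where "S = partial_sum X n"
  interpret SY: prob_Y M S by unfold_locales (simp add: S_def Sb)
  define th where "th m = 2 * pi * real m/real N" for m :: nat
  define f where "f m \<omega> = cis (- (th m * of_int y)) * exp (\<i> * of_real (th m * of_int (S \<omega>)))" for m \<omega>
  have pw: "complex_of_real (indicator {\<omega>. S \<omega> \<in> res_class y N} \<omega>) = (1/of_nat N) * (\<Sum>m<N. f m \<omega>)" for \<omega>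
  proof -
    have ec: "\<And>x. exp (\<i> * complex_of_real x) = cis x" by (simp add: cis_conv_exp)
    have "f m \<omega> = cis (2 * pi * real m * of_int (S \<omega> - y)/real N)" for m
    proof -
      have "f m \<omega> = cis (- (th m * of_int y) + th m * of_int (S \<omega>))"
        unfolding f_def ec by (rule cis_mult)
      also have "- (th m * of_int y) + th m * of_int (S \<omega>) = 2 * pi * real m * of_int (S \<omega> - y)/real N"
        unfolding th_def by (simp add: algebra_simps add_divide_distrib diff_divide_distrib)
      finally show ?thesis .
    qed
    then have "(\<Sum>m<N. f m \<omega>) = (if int N dvd (S \<omega> - y) then of_nat N else 0)"
      using roots_sum[OF N, of "S \<omega> - y"] by simp
    then show ?thesis using N by (simp add: indicator_def res_class_iff)
  qed
  have intf: "integrable M (f m)" for m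
    unfolding f_def by (intro integrable_mult_right SY.psi_int)
  have ms: "{\<omega>. S \<omega> \<in> res_class y N} \<inter> space M = {\<omega> \<in> space M. S \<omega> \<in> res_class y N}" by auto
  have "complex_of_real (measure M {\<omega> \<in> space M. S \<omega> \<in> res_class y N})
      = (CLINT \<omega>|M. complex_of_real (indicator {\<omega>. S \<omega> \<in> res_class y N} \<omega>))"
    by (simp add: ms)
  also have "\<dots> = (CLINT \<omega>|M. (1/of_nat N) * (\<Sum>m<N. f m \<omega>))" by (simp only: pw)
  also have "\<dots> = (1/of_nat N) * (CLINT \<omega>|M. (\<Sum>m<N. f m \<omega>))" by (rule integral_mult_right_zero)
  also have "(CLINT \<omega>|M. (\<Sum>m<N. f m \<omega>)) = (\<Sum>m<N. CLINT \<omega>|M. f m \<omega>)"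
    by (rule Bochner_Integration.integral_sum) (rule intf)
  also have "\<dots> = (\<Sum>m<N. cis (- (th m * of_int y)) * psi M (X 1) (th m) ^ n)"
  proof (rule sum.cong[OF refl])
    fix m
    have "(CLINT \<omega>|M. f m \<omega>) = cis (- (th m * of_int y)) * (CLINT \<omega>|M. exp (\<i> * of_real (th m * of_int (S \<omega>))))"
      unfolding f_def by (rule integral_mult_right_zero)
    also have "\<dots> = cis (- (th m * of_int y)) * psi M (X 1) (th m) ^ n"
      unfolding S_def charS ..
    finally show "(CLINT \<omega>|M. f m \<omega>) = cis (- (th m * of_int y)) * psi M (X 1) (th m) ^ n" .
  qed
  finally have eq: "complex_of_real (measure M {\<omega> \<in> space M. S \<omega> \<in> res_class y N})
      = (1/of_nat N) * (\<Sum>m<N. cis (- (th m * of_int y)) * psi M (X 1) (th m) ^ n)" .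
  have "measure M {\<omega> \<in> space M. S \<omega> \<in> res_class y N} = cmod (complex_of_real (measure M {\<omega> \<in> space M. S \<omega> \<in> res_class y N}))"
    by simp
  also have "\<dots> = (1/real N) * cmod (\<Sum>m<N. cis (- (th m * of_int y)) * psi M (X 1) (th m) ^ n)"
    unfolding eq by (simp add: norm_mult norm_divide)
  also have "\<dots> \<le> (1/real N) * (\<Sum>m<N. cmod (cis (- (th m * of_int y)) * psi M (X 1) (th m) ^ n))"
    by (intro mult_left_mono norm_sum) simp
  also have "\<dots> = (1/real N) * (\<Sum>m<N. cmod (psi M (X 1) (th m)) ^ n)"
    by (simp add: norm_mult norm_power)
  finally show ?thesis by (simp add: S_def th_def)
qed

end


lemma near_from_bigO:
  fixes \<phi> :: "real \<Rightarrow> complex" and c \<beta> \<epsilon> :: real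
  assumes O: "(\<lambda>\<theta>. \<phi> \<theta> - of_real (1 - c * \<bar>\<theta>\<bar> powr \<beta>)) \<in> O[at (0::real)](\<lambda>\<theta>. of_real (\<bar>\<theta>\<bar> powr (\<beta> + \<epsilon>)))"
    and c: "c > 0" and \<beta>: "\<beta> > 0" and \<epsilon>: "\<epsilon> > 0"
  shows "\<exists>C \<delta>. 0 \<le> C \<and> 0 < \<delta> \<and> \<delta> < pi \<and> C * \<delta> powr (min \<epsilon> (1/2)) \<le> c/2 \<and>
     (\<forall>t. 0 < t \<and> t < \<delta> \<longrightarrow> cmod (\<phi> t) \<le> 1 - c * t powr \<beta> + C * t powr (\<beta> + min \<epsilon> (1/2)))"
proof -
  define e where "e = min \<epsilon> (1/2)"
  have e: "0 < e" "e \<le> \<epsilon>" "e \<le> 1/2" using \<epsilon> by (auto simp: e_def)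
  obtain C where C: "C > 0" and ev: "eventually (\<lambda>\<theta>. norm (\<phi> \<theta> - of_real (1 - c * \<bar>\<theta>\<bar> powr \<beta>))
        \<le> C * norm (complex_of_real (\<bar>\<theta>\<bar> powr (\<beta> + \<epsilon>)))) (at (0::real))"
    using O by (elim landau_o.bigE)
  obtain d where d: "d > 0" and dH: "\<And>x. x \<noteq> 0 \<Longrightarrow> dist x 0 < d \<Longrightarrow>
      norm (\<phi> x - of_real (1 - c * \<bar>x\<bar> powr \<beta>)) \<le> C * norm (complex_of_real (\<bar>x\<bar> powr (\<beta> + \<epsilon>)))"
    using ev unfolding eventually_at by auto
  define \<delta> where "\<delta> = min (min (d/2) (1/2)) (min ((1/c) powr (1/\<beta>)) ((c/(2*C)) powr (1/e)))"
  have \<delta>0: "0 < \<delta>" using d c C by (simp add: \<delta>_def)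
  have \<delta>1: "\<delta> \<le> 1/2" by (simp add: \<delta>_def)
  have \<delta>pi: "\<delta> < pi" using \<delta>1 pi_gt3 by linarith
  have Cd: "C * \<delta> powr e \<le> c/2"
  proof -
    have "\<delta> powr e \<le> ((c/(2*C)) powr (1/e)) powr e"
      using \<delta>0 e by (intro powr_mono2) (auto simp: \<delta>_def)
    also have "\<dots> = c/(2*C)" using e c C by (simp add: powr_powr)
    finally have "C * \<delta> powr e \<le> C * (c/(2*C))" using C by (intro mult_left_mono) auto
    also have "\<dots> = c/2" using C by simp
    finally show ?thesis .
  qed
  have nb: "cmod (\<phi> t) \<le> 1 - c * t powr \<beta> + C * t powr (\<beta> + e)" if t: "0 < t" "t < \<delta>" for t
  proof -
    have td: "dist t 0 < d" using t d by (simp add: \<delta>_def)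
    have h: "norm (\<phi> t - of_real (1 - c * t powr \<beta>)) \<le> C * t powr (\<beta> + \<epsilon>)"
      using dH[of t] t td by simp
    have t1: "t \<le> 1" using t \<delta>1 by simp
    have "t powr (\<beta> + \<epsilon>) \<le> t powr (\<beta> + e)" using t t1 e by (intro powr_mono') auto
    then have h2: "C * t powr (\<beta> + \<epsilon>) \<le> C * t powr (\<beta> + e)" using C by (intro mult_left_mono) auto
    have "t powr \<beta> \<le> ((1/c) powr (1/\<beta>)) powr \<beta>"
      using t \<beta> by (intro powr_mono2) (auto simp: \<delta>_def)
    also have "\<dots> = 1/c" using c \<beta> by (simp add: powr_powr)
    finally have "c * t powr \<beta> \<le> c * (1/c)" using c by (intro mult_left_mono) auto
    then have ct: "c * t powr \<beta> \<le> 1" using c by simp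
    have "cmod (\<phi> t) \<le> cmod (complex_of_real (1 - c * t powr \<beta>)) + norm (\<phi> t - of_real (1 - c * t powr \<beta>))"
      by (rule norm_triangle_sub)
    also have "cmod (complex_of_real (1 - c * t powr \<beta>)) = 1 - c * t powr \<beta>"
      by (simp only: norm_of_real) (use ct in simp)
    finally show ?thesis using h h2 by linarith
  qed
  show ?thesis
    using C Cd \<delta>0 \<delta>pi nb unfolding e_def by (intro exI[of _ C] exI[of _ \<delta>]) auto
qed

lemma gen_one:
  fixes S :: "int set"
  assumes "gen_subgroup S = UNIV"
  shows "\<exists>F a. finite F \<and> F \<subseteq> S \<and> 1 = (\<Sum>s\<in>F. a s * s)"
proof -
  define H where "H = {n. \<exists>F a. finite F \<and> F \<subseteq> S \<and> n = (\<Sum>s\<in>F. a s * s)}"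
  have sub: "int_subgroup H"
    unfolding int_subgroup_def
  proof (intro conjI ballI)
    show "0 \<in> H" unfolding H_def by (intro CollectI exI[of _ "{}"]) auto
  next
    fix x y assume "x \<in> H" "y \<in> H"
    then obtain F1 a1 F2 a2 where F1: "finite F1" "F1 \<subseteq> S" "x = (\<Sum>s\<in>F1. a1 s * s)"
      and F2: "finite F2" "F2 \<subseteq> S" "y = (\<Sum>s\<in>F2. a2 s * s)" unfolding H_def by blast
    define b where "b s = (if s \<in> F1 then a1 s else 0) - (if s \<in> F2 then a2 s else 0)" for s
    have e1: "(\<Sum>s\<in>F1 \<union> F2. (if s \<in> F1 then a1 s else 0) * s) = (\<Sum>s\<in>F1. a1 s * s)"
      by (rule sum.mono_neutral_cong_right) (use F1 F2 in auto)
    have e2: "(\<Sum>s\<in>F1 \<union> F2. (if s \<in> F2 then a2 s else 0) * s) = (\<Sum>s\<in>F2. a2 s * s)"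
      by (rule sum.mono_neutral_cong_right) (use F1 F2 in auto)
    have "x - y = (\<Sum>s\<in>F1 \<union> F2. b s * s)"
      unfolding b_def left_diff_distrib sum_subtractf e1 e2 F1(3) F2(3) ..
    then show "x - y \<in> H" unfolding H_def using F1 F2 by blast
  qed
  have "S \<subseteq> H"
  proof
    fix s assume "s \<in> S"
    then show "s \<in> H" unfolding H_def by (intro CollectI exI[of _ "{s}"] exI[of _ "\<lambda>_. 1"]) auto
  qed
  with sub have "gen_subgroup S \<subseteq> H" unfolding gen_subgroup_def by blast
  then have "1 \<in> H" using assms by auto
  then show ?thesis unfolding H_def by blast
qed

lemma gen_empty: "gen_subgroup {} \<noteq> UNIV"
proof -
  have "int_subgroup {0}" by (simp add: int_subgroup_def)
  then have "gen_subgroup {} \<subseteq> {0}" unfolding gen_subgroup_def by blast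
  moreover have "(1::int) \<notin> {0}" by simp
  ultimately show ?thesis by blast
qed


context iidX begin

lemma pN_bound:
  assumes N: "N \<ge> 2" and i: "i < N"
  shows "pN M X N i \<le> (1/real N) * (\<Sum>m<N. cmod (psi M (X 1) (2*pi*real m/real N)) ^ i)"
proof (cases "i = 0")
  case True
  then show ?thesis using N by (simp add: pN_def)
next
  case False
  have fin: "finite {y::int. \<bar>y\<bar> \<le> int i}"
  proof -
    have "{y::int. \<bar>y\<bar> \<le> int i} = {- int i..int i}" by auto
    then show ?thesis by simp
  qed
  have ne: "{y::int. \<bar>y\<bar> \<le> int i} \<noteq> {}" by (auto intro!: exI[of _ 0])
  have all: "\<forall>a\<in>(\<lambda>y. measure M {\<omega> \<in> space M. partial_sum X i \<omega> \<in> res_class y N}) ` {y. \<bar>y\<bar> \<le> int i}.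
      a \<le> (1/real N) * (\<Sum>m<N. cmod (psi M (X 1) (2*pi*real m/real N)) ^ i)"
    using probS[of N i] N by auto
  have "pN M X N i = Max ((\<lambda>y. measure M {\<omega> \<in> space M. partial_sum X i \<omega> \<in> res_class y N}) ` {y. \<bar>y\<bar> \<le> int i})"
    using False by (simp add: pN_def)
  also have "\<dots> \<le> (1/real N) * (\<Sum>m<N. cmod (psi M (X 1) (2*pi*real m/real N)) ^ i)"
    using fin ne all by (subst Max_le_iff) auto
  finally show ?thesis .
qed

end

theorem proposition6:
  fixes M :: "'a measure" and X :: "nat \<Rightarrow> 'a \<Rightarrow> int"
    and \<beta> c_star \<epsilon> :: real
  assumes "prob_space M"
    and indep: "prob_space.indep_vars M (\<lambda>_. count_space UNIV) X {1..}"
    and ident: "\<And>j. j \<ge> 1 \<Longrightarrow>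
        distr M (count_space UNIV) (X j) = distr M (count_space UNIV) (X 1)"
    and A1: "\<And>y. gen_subgroup {y + k | k. measure M {\<omega> \<in> space M. X 1 \<omega> = k} > 0} = UNIV"
    and A2: "\<And>k. measure M {\<omega> \<in> space M. X 1 \<omega> = k} = measure M {\<omega> \<in> space M. X 1 \<omega> = - k}"
    and A3_beta: "0 < \<beta>" "\<beta> \<le> 2"
    and A3_c: "c_star > 0" and A3_eps: "\<epsilon> > 0"
    and A3: "(\<lambda>\<theta>. char_fun M X \<theta> - of_real (1 - c_star * \<bar>\<theta>\<bar> powr \<beta>))
               \<in> O[at (0::real)](\<lambda>\<theta>. of_real (\<bar>\<theta>\<bar> powr (\<beta> + \<epsilon>)))"
  shows "(\<beta> < 1 \<longrightarrow> (\<exists>c8>0. \<forall>N::nat. N \<ge> 2 \<longrightarrow> (\<Sum>i<N. pN M X N i) \<le> c8))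
       \<and> (\<beta> = 1 \<longrightarrow> (\<exists>c9>0. \<forall>N::nat. N \<ge> 2 \<longrightarrow>
             (\<Sum>i<N. pN M X N i) \<le> 1 / (c_star * pi) * ln (real N) + c9))
       \<and> (1 < \<beta> \<longrightarrow> (\<exists>c10>0. \<forall>N::nat. N \<ge> 2 \<longrightarrow>
             (\<Sum>i<N. pN M X N i) \<le> c10 * real N powr ((\<beta> - 1) / \<beta>)))"
proof -
  interpret P: prob_space M by fact
  interpret I: iidX M X
  proof unfold_locales
    show "P.indep_vars (\<lambda>_. count_space UNIV) X {1..}" by (rule indep)
    show "\<And>j. 1 \<le> j \<Longrightarrow> distr M (count_space UNIV) (X j) = distr M (count_space UNIV) (X 1)" by (rule ident)
  qed
  interpret Y1: prob_Y M "X 1" by unfold_locales (rule I.Xb, simp)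
  have pkeq: "\<And>k. Y1.pk k = measure M {\<omega> \<in> space M. X 1 \<omega> = k}" by (rule Y1.pk_def)
  have cf: "char_fun M X t = psi M (X 1) t" for t
    unfolding char_fun_def using infsumI[OF Y1.psi_has_sum[of t]] unfolding pkeq .
  have A3': "(\<lambda>\<theta>. psi M (X 1) \<theta> - of_real (1 - c_star * \<bar>\<theta>\<bar> powr \<beta>))
               \<in> O[at (0::real)](\<lambda>\<theta>. of_real (\<bar>\<theta>\<bar> powr (\<beta> + \<epsilon>)))"
  proof -
    have cf': "char_fun M X = psi M (X 1)" by (rule ext) (rule cf)
    show ?thesis using A3 unfolding cf' .
  qed
  define e where "e = min \<epsilon> (1/2)"
  have e: "0 < e" "e < 1" using A3_eps by (auto simp: e_def)
  obtain C \<delta> where C: "0 \<le> C" and \<delta>: "0 < \<delta>" "\<delta> < pi" and C\<delta>: "C * \<delta> powr e \<le> c_star/2"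
    and near: "\<And>t. 0 < t \<Longrightarrow> t < \<delta> \<Longrightarrow> cmod (psi M (X 1) t) \<le> 1 - c_star * t powr \<beta> + C * t powr (\<beta> + e)"
    using near_from_bigO[OF A3' A3_c A3_beta(1) A3_eps] unfolding e_def by blast
  obtain k0 where p0: "Y1.pk k0 > 0"
  proof (rule ccontr)
    assume "\<not> thesis"
    then have "\<forall>k. \<not> Y1.pk k > 0" using that by blast
    then have "\<forall>k. \<not> measure M {\<omega> \<in> space M. X 1 \<omega> = k} > 0" unfolding pkeq .
    then have "{0 + k | k. measure M {\<omega> \<in> space M. X 1 \<omega> = k} > 0} = {}" by blast
    then show False using A1[of 0] gen_empty by simp
  qed
  obtain F a where F: "finite F" and FS: "F \<subseteq> {- k0 + k | k. measure M {\<omega> \<in> space M. X 1 \<omega> = k} > 0}"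
    and comb: "1 = (\<Sum>s\<in>F. a s * s)"
    using gen_one[OF A1[of "- k0"]] by blast
  have pF: "Y1.pk (s + k0) > 0" if "s \<in> F" for s
    unfolding pkeq using FS that by auto
  obtain \<rho> where \<rho>: "0 \<le> \<rho>" "\<rho> < 1" and far: "\<And>t. \<delta> \<le> t \<Longrightarrow> t \<le> 2*pi - \<delta> \<Longrightarrow> cmod (psi M (X 1) t) \<le> \<rho>"
    using Y1.far_bound[OF F p0 pF comb \<delta>] by blast
  interpret R: rsetup "\<lambda>t. cmod (psi M (X 1) t)" \<rho> \<delta> c_star C \<beta> e
  proof unfold_locales
    show "\<And>t. 0 \<le> cmod (psi M (X 1) t)" by simp
    show "\<And>t. cmod (psi M (X 1) t) \<le> 1" by (rule Y1.psi_le1)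
    show "\<And>t. cmod (psi M (X 1) (2*pi - t)) = cmod (psi M (X 1) t)" unfolding Y1.psi_sym by (rule complex_mod_cnj)
    show "0 \<le> \<rho>" "\<rho> < 1" by (fact \<rho>)+
    show "0 < \<delta>" "\<delta> < pi" by (fact \<delta>)+
    show "\<And>t. \<delta> \<le> t \<Longrightarrow> t \<le> 2*pi - \<delta> \<Longrightarrow> cmod (psi M (X 1) t) \<le> \<rho>" by (rule far)
    show "\<And>t. 0 < t \<Longrightarrow> t < \<delta> \<Longrightarrow> cmod (psi M (X 1) t) \<le> 1 - c_star * t powr \<beta> + C * t powr (\<beta> + e)"
      by (rule near)
    show "0 \<le> C" by fact
    show "C * \<delta> powr e \<le> c_star / 2" by fact
    show "0 < c_star" by fact
    show "0 < \<beta>" by fact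
    show "0 < e" "e < 1" by (fact e)+
  qed
  have pb: "\<And>i. i < N \<Longrightarrow> pN M X N i \<le> (1/real N) * (\<Sum>m<N. cmod (psi M (X 1) (2*pi*real m/real N)) ^ i)"
    if "N \<ge> 2" for N using I.pN_bound that by blast
  have r1: "0 < 1/(1-\<rho>)" using \<rho> by simp
  show ?thesis
  proof (intro conjI impI)
    assume b: "\<beta> < 1"
    define c8 where "c8 = 1 + 1/(1-\<rho>) + (4/c_star) * (2*pi) powr (-\<beta>) * (1 + 1/(1-\<beta>))"
    have "0 \<le> (4/c_star) * (2*pi) powr (-\<beta>) * (1 + 1/(1-\<beta>))" using A3_c b by simp
    then have "c8 > 0" using r1 unfolding c8_def by linarith
    moreover have "\<forall>N::nat. N \<ge> 2 \<longrightarrow> (\<Sum>i<N. pN M X N i) \<le> c8"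
      unfolding c8_def using R.case_lt1[OF b _ pb] by blast
    ultimately show "\<exists>c8>0. \<forall>N::nat. N \<ge> 2 \<longrightarrow> (\<Sum>i<N. pN M X N i) \<le> c8" by blast
  next
    assume b: "\<beta> = 1"
    define c9 where "c9 = 1 + 1/(1-\<rho>) + 1/(c_star*pi) + 2*(2*C/c_star^2) * (2*pi) powr (e - 1) * (1 + 1/e)"
    have "0 \<le> 1/(c_star*pi) + 2*(2*C/c_star^2) * (2*pi) powr (e - 1) * (1 + 1/e)" using A3_c C e by simp
    then have "c9 > 0" using r1 unfolding c9_def by linarith
    moreover have "\<forall>N::nat. N \<ge> 2 \<longrightarrow> (\<Sum>i<N. pN M X N i) \<le> 1 / (c_star * pi) * ln (real N) + c9"
      unfolding c9_def using R.case_eq1[OF b _ pb] by blast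
    ultimately show "\<exists>c9>0. \<forall>N::nat. N \<ge> 2 \<longrightarrow> (\<Sum>i<N. pN M X N i) \<le> 1 / (c_star * pi) * ln (real N) + c9"
      by blast
  next
    assume b: "1 < \<beta>"
    define c10 where "c10 = 3 + 1/(1-\<rho>) + 2 * ((2/c_star) * (2*pi) powr (-\<beta>)) * 2 powr (\<beta> - 1) / (\<beta> - 1)"
    have "0 \<le> 2 * ((2/c_star) * (2*pi) powr (-\<beta>)) * 2 powr (\<beta> - 1) / (\<beta> - 1)" using A3_c b by simp
    then have "c10 > 0" using r1 unfolding c10_def by linarith
    moreover have "\<forall>N::nat. N \<ge> 2 \<longrightarrow> (\<Sum>i<N. pN M X N i) \<le> c10 * real N powr ((\<beta> - 1) / \<beta>)"
      unfolding c10_def using R.case_gt1[OF b _ pb] by blast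
    ultimately show "\<exists>c10>0. \<forall>N::nat. N \<ge> 2 \<longrightarrow> (\<Sum>i<N. pN M X N i) \<le> c10 * real N powr ((\<beta> - 1) / \<beta>)"
      by blast
  qed
qed


end
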